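(* Let $r$ be a positive integer and $n\ge0$. Each of the following sets is a basis of $\mathrm{NCQSym}^r_n(\mathbf{x})$: (1) $\{\mathbf{M}_{(\Phi,\Pi)}:(\Phi,\Pi)\text{ an } r\text{-set-composition of }[n]\}$; (2) $\{\overline{\mathbf{F}}_{(\Phi,\Pi)}:(\Phi,\Pi)\text{ an } r\text{-set-composition of }[n]\}$.
   Context: Noncommuting variables $\mathbf{x}_1,\mathbf{x}_2,\dots$. A set composition $\Phi=(\Phi_1|\cdots|\Phi_k)$ of a finite set is an ordered list of disjoint nonempty blocks with that union; a set partition $\Pi=\Pi_1/\cdots/\Pi_l$ an unordered one. An $r$-set-composition of $[n]$ is a pair $(\Phi,\Pi)$ with $\Phi$ a set composition of some $A\subseteq[n]$ with all blocks of size $\ge r$ and $\Pi$ a set partition of $[n]\setminus A$ with all blocks of size $<r$. $\mathbf{M}_{(\Phi,\Pi)}=\sum\mathbf{x}_{i_1}\cdots\mathbf{x}_{i_n}$ over tuples with $i_j=i_k$ iff $j,k$ lie in a common block of $\Phi$ or $\Pi$, and $i_j<i_k$ whenever $j\in\Phi_l,k\in\Phi_m$, $l<m$; $\mathrm{NCQSym}^r_n(\mathbf{x})$ is the $\mathbb{Q}$-span of these $\mathbf{M}_{(\Phi,\Pi)}$. An edge-coloured digraph is a finite simple digraph with each edge of type dashed ($\dashrightarrow$), solid ($\rightarrow$) or double ($\Rightarrow$); a proper vertex-colouring is $\kappa:V\to\mathbb{P}$ with $\kappa(a)\ne\kappa(b)$, $\kappa(a)<\kappa(b)$, $\kappa(a)\le\kappa(b)$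 for dashed, solid, double edges $(a,b)$ respectively. A labelled edge-coloured digraph $(G,L)$ has a bijection $L:V(G)\to[|V(G)|]$ and $\mathscr{Y}_{(G,L)}(\mathbf{x})=\sum_\kappa\mathbf{x}_{\kappa(L^{-1}(1))}\mathbf{x}_{\kappa(L^{-1}(2))}\cdots\mathbf{x}_{\kappa(L^{-1}(|V(G)|))}$ over proper vertex-colourings $\kappa$. For a finite set $A\subseteq\mathbb{P}$, $C_A$ is a directed cycle on $|A|$ vertices with all edges double and vertices labelled bijectively by $A$ (a single vertex with no edges if $|A|=1$). The dashed (resp. double) sum of two labelled edge-coloured digraphs is their disjoint union together with a dashed (resp. double) edge $(a,b)$ for every vertex $a$ of the first and $b$ of the second. Define $\overline{\mathbf{F}}_{(\Phi,\Pi)}=\mathscr{Y}_{(G,L)}(\mathbf{x})$ where $(G,L)$ is the dashed sum of $\big(C_{\Phi_1}$ double-sum $C_{\Phi_2}$ double-sum $\cdots$ double-sum $C_{\Phi_k}\big)$ and $\big(C_{\Pi_1}$ dashed-sum $\cdots$ dashed-sum $C_{\Pi_l}\big)$. *)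

theory Defs
  imports Complex_Main "HOL-Library.Function_Algebras" "HOL-Library.Disjoint_Sets"
begin

text \<open>A noncommutative formal series in x_1, x_2, ... with rational coefficients is a
function from words (lists of positive integers) to rat; the word [i_1,...,i_n] stands
for the monomial x_{i_1} ... x_{i_n}.\<close>

type_synonym ncseries = "nat list \<Rightarrow> rat"

definition qscale :: "rat \<Rightarrow> ncseries \<Rightarrow> ncseries" where
  "qscale c f = (\<lambda>w. c * f w)"

definition basis_family :: "ncseries set \<Rightarrow> 'i set \<Rightarrow> ('i \<Rightarrow> ncseries) \<Rightarrow> bool" where
  "basis_family V I v \<longleftrightarrow>
     inj_on v I \<and> \<not> module.dependent qscale (v ` I) \<and> module.span qscale (v ` I) = V"

definition set_composition :: "nat set \<Rightarrow> nat set list \<Rightarrow> bool" where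
  "set_composition A Ph \<longleftrightarrow>
     (\<forall>B\<in>set Ph. B \<noteq> {}) \<and>
     (\<forall>i<length Ph. \<forall>j<length Ph. i \<noteq> j \<longrightarrow> Ph ! i \<inter> Ph ! j = {}) \<and>
     \<Union>(set Ph) = A"

definition r_set_composition :: "nat \<Rightarrow> nat \<Rightarrow> nat set list \<times> nat set set \<Rightarrow> bool" where
  "r_set_composition r n PP \<longleftrightarrow>
     (case PP of (Ph, Pt) \<Rightarrow>
       (\<exists>A. A \<subseteq> {1..n} \<and> set_composition A Ph \<and> (\<forall>B\<in>set Ph. card B \<ge> r) \<and>
            partition_on ({1..n} - A) Pt \<and> (\<forall>B\<in>Pt. card B < r)))"

definition rsc :: "nat \<Rightarrow> nat \<Rightarrow> (nat set list \<times> nat set set) set" where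
  "rsc r n = {PP. r_set_composition r n PP}"

definition same_block :: "nat set list \<Rightarrow> nat set set \<Rightarrow> nat \<Rightarrow> nat \<Rightarrow> bool" where
  "same_block Ph Pt j k \<longleftrightarrow> (\<exists>B \<in> set Ph \<union> Pt. j \<in> B \<and> k \<in> B)"

text \<open>Coefficient of the word w = [i_1,...,i_n] in M_(Ph,Pt) (position j has letter w!(j-1)).\<close>
definition Mmon :: "nat \<Rightarrow> nat set list \<times> nat set set \<Rightarrow> ncseries" where
  "Mmon n PP = (\<lambda>w. case PP of (Ph, Pt) \<Rightarrow>
     (if length w = n \<and> 0 \<notin> set w \<and>
         (\<forall>j\<in>{1..n}. \<forall>k\<in>{1..n}. (w ! (j-1) = w ! (k-1)) \<longleftrightarrow> same_block Ph Pt j k) \<and>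
         (\<forall>l m j k. l < m \<and> m < length Ph \<and> j \<in> Ph ! l \<and> k \<in> Ph ! m \<longrightarrow>
             w ! (j-1) < w ! (k-1))
      then 1 else 0))"

definition NCQSym :: "nat \<Rightarrow> nat \<Rightarrow> ncseries set" where
  "NCQSym r n = module.span qscale (Mmon n ` rsc r n)"

datatype ecol = Dashed | Solid | Double

text \<open>A labelled edge-coloured digraph whose vertices are identified with their labels:
a finite vertex set V of positive integers and an edge map E (E a b = Some t: an edge
(a,b) of type t).  The labelling is the identity, so in the final graph V = {1..n}.\<close>
type_synonym lecg = "nat set \<times> (nat \<Rightarrow> nat \<Rightarrow> ecol option)"

definition proper_colouring :: "lecg \<Rightarrow> (nat \<Rightarrow> nat) \<Rightarrow> bool" where
  "proper_colouring G kappa \<longleftrightarrow>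
     (case G of (V, E) \<Rightarrow>
       kappa \<in> extensional V \<and> (\<forall>v\<in>V. kappa v \<ge> 1) \<and>
       (\<forall>a\<in>V. \<forall>b\<in>V.
          (E a b = Some Dashed \<longrightarrow> kappa a \<noteq> kappa b) \<and>
          (E a b = Some Solid \<longrightarrow> kappa a < kappa b) \<and>
          (E a b = Some Double \<longrightarrow> kappa a \<le> kappa b)))"

text \<open>Y_(G,L): the coefficient of w is the number of proper colourings kappa with
 w = kappa(L^-1 1) ... kappa(L^-1 |V|); here L^-1 i = i.\<close>
definition Ypoly :: "lecg \<Rightarrow> ncseries" where
  "Ypoly G = (\<lambda>w. of_nat (card {kappa. proper_colouring G kappa \<and>
                     w = map kappa [1..<card (fst G) + 1]}))"

definition empty_graph :: lecg where
  "empty_graph = ({}, (\<lambda>a b. None))"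

definition gsum :: "ecol \<Rightarrow> lecg \<Rightarrow> lecg \<Rightarrow> lecg" where
  "gsum t G H = (case G of (V1, E1) \<Rightarrow> case H of (V2, E2) \<Rightarrow>
     (V1 \<union> V2, (\<lambda>a b. if a \<in> V1 \<and> b \<in> V1 then E1 a b
                      else if a \<in> V2 \<and> b \<in> V2 then E2 a b
                      else if a \<in> V1 \<and> b \<in> V2 then Some t
                      else None)))"

definition gsum_list :: "ecol \<Rightarrow> lecg list \<Rightarrow> lecg" where
  "gsum_list t Gs = foldr (gsum t) Gs empty_graph"

definition cycle_graph :: "nat set \<Rightarrow> lecg" where
  "cycle_graph A = (let xs = sorted_list_of_set A in
     (A, (\<lambda>a b. if card A \<ge> 2 \<and>
                   (\<exists>i<length xs. a = xs ! i \<and> b = xs ! ((i + 1) mod length xs))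
                then Some Double else None)))"

definition enum_blocks :: "nat set set \<Rightarrow> nat set list" where
  "enum_blocks P = (SOME xs. distinct xs \<and> set xs = P)"

definition Fbar_graph :: "nat set list \<times> nat set set \<Rightarrow> lecg" where
  "Fbar_graph PP = (case PP of (Ph, Pt) \<Rightarrow>
     gsum Dashed (gsum_list Double (map cycle_graph Ph))
                 (gsum_list Dashed (map cycle_graph (enum_blocks Pt))))"

definition Fbar :: "nat set list \<times> nat set set \<Rightarrow> ncseries" where
  "Fbar PP = Ypoly (Fbar_graph PP)"

end

theory Submission
  imports Defs
begin


interpretation Q: vector_space qscale
  by unfold_locales (auto simp: qscale_def fun_eq_iff algebra_simps)

definition blocks :: "nat set list \<times> nat set set \<Rightarrow> nat set set" where
  "blocks PP = set (fst PP) \<union> snd PP"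

lemma rscD:
  assumes "(Ph, Pt) \<in> rsc r n"
  shows "\<forall>B\<in>set Ph. B \<noteq> {}"
    and "\<forall>i<length Ph. \<forall>j<length Ph. i \<noteq> j \<longrightarrow> Ph ! i \<inter> Ph ! j = {}"
    and "\<forall>B\<in>set Ph. r \<le> card B"
    and "\<Union>(set Ph) \<subseteq> {1..n}"
    and "partition_on ({1..n} - \<Union>(set Ph)) Pt"
    and "\<forall>B\<in>Pt. card B < r"
  using assms unfolding rsc_def r_set_composition_def set_composition_def by auto

lemma rsc_blocks:
  assumes "(Ph, Pt) \<in> rsc r n"
  shows blocks_sub: "\<And>B. B \<in> blocks (Ph,Pt) \<Longrightarrow> B \<subseteq> {1..n}"
    and blocks_cover: "\<And>j. j \<in> {1..n} \<Longrightarrow> \<exists>B\<in>blocks (Ph,Pt). j \<in> B"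
    and blocks_ne: "\<And>B. B \<in> blocks (Ph,Pt) \<Longrightarrow> B \<noteq> {}"
    and blocks_uniq: "\<And>B B' x. B \<in> blocks (Ph,Pt) \<Longrightarrow> B' \<in> blocks (Ph,Pt) \<Longrightarrow> x \<in> B \<Longrightarrow> x \<in> B' \<Longrightarrow> B = B'"
    and blocks_big: "\<And>B. B \<in> blocks (Ph,Pt) \<Longrightarrow> r \<le> card B \<Longrightarrow> B \<in> set Ph"
    and blocks_small: "\<And>B. B \<in> blocks (Ph,Pt) \<Longrightarrow> card B < r \<Longrightarrow> B \<in> Pt"
    and "\<Union>(blocks (Ph,Pt)) = {1..n}"
proof -
  note D = rscD[OF assms]
  have pt: "\<Union>Pt = {1..n} - \<Union>(set Ph)" "disjoint Pt" "{} \<notin> Pt"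
    using D(5) unfolding partition_on_def by auto
  show U: "\<Union>(blocks (Ph,Pt)) = {1..n}" using D(4) pt(1) unfolding blocks_def by auto
  show "\<And>B. B \<in> blocks (Ph,Pt) \<Longrightarrow> B \<subseteq> {1..n}" using U by blast
  show "\<And>j. j \<in> {1..n} \<Longrightarrow> \<exists>B\<in>blocks (Ph,Pt). j \<in> B" using U by blast
  show "\<And>B. B \<in> blocks (Ph,Pt) \<Longrightarrow> B \<noteq> {}" using D(1) pt(3) unfolding blocks_def by auto
  show uq: "\<And>B B' x. B \<in> blocks (Ph,Pt) \<Longrightarrow> B' \<in> blocks (Ph,Pt) \<Longrightarrow> x \<in> B \<Longrightarrow> x \<in> B' \<Longrightarrow> B = B'"
  proof -
    fix B B' x assume B: "B \<in> blocks (Ph,Pt)" and B': "B' \<in> blocks (Ph,Pt)" and x: "x \<in> B" "x \<in> B'"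
    show "B = B'"
    proof (cases "B \<in> set Ph")
      case True
      then obtain i where i: "i < length Ph" "B = Ph ! i" by (auto simp: in_set_conv_nth)
      show ?thesis
      proof (cases "B' \<in> set Ph")
        case True
        then obtain j where j: "j < length Ph" "B' = Ph ! j" by (auto simp: in_set_conv_nth)
        then show ?thesis using i x D(2) by (cases "i = j") auto
      next
        case False
        then have "B' \<in> Pt" using B' unfolding blocks_def by auto
        then show ?thesis using pt(1) x True by auto
      qed
    next
      case False
      then have "B \<in> Pt" using B unfolding blocks_def by auto
      show ?thesis
      proof (cases "B' \<in> set Ph")
        case True
        then show ?thesis using pt(1) x \<open>B \<in> Pt\<close> by auto
      next
        case False
        then have "B' \<in> Pt" using B' unfolding blocks_def by auto
        then show ?thesis using pt(2) x \<open>B \<in> Pt\<close> by (meson disjointD disjoint_iff)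
      qed
    qed
  qed
  show "\<And>B. B \<in> blocks (Ph,Pt) \<Longrightarrow> r \<le> card B \<Longrightarrow> B \<in> set Ph"
    using D(6) unfolding blocks_def by fastforce
  show "\<And>B. B \<in> blocks (Ph,Pt) \<Longrightarrow> card B < r \<Longrightarrow> B \<in> Pt"
    using D(3) unfolding blocks_def by fastforce
qed

lemma rsc_finite_blocks:
  assumes "(Ph, Pt) \<in> rsc r n"
  shows "finite (blocks (Ph,Pt))" "\<And>B. B \<in> blocks (Ph,Pt) \<Longrightarrow> finite B"
proof -
  have "blocks (Ph,Pt) \<subseteq> Pow {1..n}" using blocks_sub[OF assms] by auto
  then show "finite (blocks (Ph,Pt))" by (rule finite_subset) simp
  show "\<And>B. B \<in> blocks (Ph,Pt) \<Longrightarrow> finite B" using blocks_sub[OF assms] by (meson finite_atLeastAtMost finite_subset)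
qed

lemma rsc_distinct:
  assumes "(Ph, Pt) \<in> rsc r n"
  shows "distinct Ph"
proof -
  note D = rscD[OF assms]
  show ?thesis unfolding distinct_conv_nth
    using D(1) D(2) by (metis inf.idem nth_mem)
qed

lemma rsc_finite: "finite (rsc r n)"
proof -
  let ?S = "{xs. set xs \<subseteq> Pow {1..n} \<and> distinct xs} \<times> Pow (Pow {1..n})"
  have "rsc r n \<subseteq> ?S"
  proof
    fix PP assume a: "PP \<in> rsc r n"
    obtain Ph Pt where P: "PP = (Ph,Pt)" by force
    have "(Ph,Pt) \<in> rsc r n" using a P by simp
    then show "PP \<in> ?S" using P blocks_sub[of Ph Pt r n] rsc_distinct[of Ph Pt r n]
      unfolding blocks_def by auto
  qed
  moreover have "finite ?S"
    by (intro finite_cartesian_product finite_subset[OF _ finite_subset_distinct[of "Pow {1..n}"]]) auto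
  ultimately show ?thesis by (rule finite_subset)
qed

definition Mc :: "nat \<Rightarrow> nat set list \<Rightarrow> nat set set \<Rightarrow> nat list \<Rightarrow> bool" where
  "Mc n Ph Pt w \<longleftrightarrow> length w = n \<and> 0 \<notin> set w \<and>
     (\<forall>j\<in>{1..n}. \<forall>k\<in>{1..n}. (w ! (j-1) = w ! (k-1)) \<longleftrightarrow> same_block Ph Pt j k) \<and>
     (\<forall>l m j k. l < m \<and> m < length Ph \<and> j \<in> Ph ! l \<and> k \<in> Ph ! m \<longrightarrow> w ! (j-1) < w ! (k-1))"

lemma Mmon_eq: "Mmon n (Ph,Pt) w = (if Mc n Ph Pt w then 1 else 0)"
  by (simp add: Mmon_def Mc_def)

lemma same_block_blocks: "same_block Ph Pt j k \<longleftrightarrow> (\<exists>B\<in>blocks (Ph,Pt). j \<in> B \<and> k \<in> B)"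
  by (simp add: same_block_def blocks_def)

definition key :: "nat list \<Rightarrow> nat set \<Rightarrow> nat" where
  "key w B = w ! (Min B - 1)"

lemma Mc_class:
  assumes P: "(Ph, Pt) \<in> rsc r n" and M: "Mc n Ph Pt w" and B: "B \<in> blocks (Ph,Pt)" and j: "j \<in> B"
  shows "B = {k\<in>{1..n}. w ! (k-1) = w ! (j-1)}"
proof -
  have jn: "j \<in> {1..n}" using blocks_sub[OF P B] j by auto
  show ?thesis
  proof (intro set_eqI iffI)
    fix k assume k: "k \<in> B"
    then have "k \<in> {1..n}" using blocks_sub[OF P B] by auto
    moreover have "same_block Ph Pt k j" using B j k by (auto simp: same_block_blocks)
    ultimately show "k \<in> {k\<in>{1..n}. w ! (k-1) = w ! (j-1)}" using M jn unfolding Mc_def by auto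
  next
    fix k assume "k \<in> {k\<in>{1..n}. w ! (k-1) = w ! (j-1)}"
    then have k: "k \<in> {1..n}" "w ! (k-1) = w ! (j-1)" by auto
    then have "same_block Ph Pt k j" using M jn unfolding Mc_def by auto
    then obtain B3 where "B3 \<in> blocks (Ph,Pt)" "k \<in> B3" "j \<in> B3" by (auto simp: same_block_blocks)
    then show "k \<in> B" using blocks_uniq[OF P _ B _ j] by metis
  qed
qed

lemma Mc_key:
  assumes P: "(Ph, Pt) \<in> rsc r n" and M: "Mc n Ph Pt w" and B: "B \<in> blocks (Ph,Pt)"
  shows "B = {k\<in>{1..n}. w ! (k-1) = key w B}" "Min B \<in> B"
proof -
  show "Min B \<in> B" using rsc_finite_blocks(2)[OF P B] blocks_ne[OF P B] by simp
  then show "B = {k\<in>{1..n}. w ! (k-1) = key w B}" using Mc_class[OF P M B] unfolding key_def by blast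
qed

lemma Mc_unique:
  assumes P: "(Ph, Pt) \<in> rsc r n" and Q: "(Ph', Pt') \<in> rsc r n"
    and M: "Mc n Ph Pt w" and M': "Mc n Ph' Pt' w"
  shows "Ph = Ph' \<and> Pt = Pt'"
proof -
  have sub: "blocks (Ph,Pt) \<subseteq> blocks (Ph',Pt')"
    if P: "(Ph, Pt) \<in> rsc r n" and Q: "(Ph', Pt') \<in> rsc r n"
    and M: "Mc n Ph Pt w" and M': "Mc n Ph' Pt' w" for Ph Pt Ph' Pt'
  proof
    fix B assume B: "B \<in> blocks (Ph,Pt)"
    obtain j where j: "j \<in> B" using blocks_ne[OF P B] by auto
    then have "j \<in> {1..n}" using blocks_sub[OF P B] by auto
    then obtain B' where B': "B' \<in> blocks (Ph',Pt')" "j \<in> B'" using blocks_cover[OF Q] by blast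
    have "B = B'" using Mc_class[OF P M B j] Mc_class[OF Q M' B'] by simp
    then show "B \<in> blocks (Ph',Pt')" using B' by simp
  qed
  have bl: "blocks (Ph,Pt) = blocks (Ph',Pt')" using sub[OF P Q M M'] sub[OF Q P M' M] by blast
  have sPh: "set Ph = {B\<in>blocks (Ph,Pt). r \<le> card B}"
    if P: "(Ph, Pt) \<in> rsc r n" for Ph Pt
    using rscD(3)[OF P] blocks_big[OF P] by (auto simp: blocks_def)
  have sPt: "Pt = {B\<in>blocks (Ph,Pt). card B < r}"
    if P: "(Ph, Pt) \<in> rsc r n" for Ph Pt
    using rscD(6)[OF P] blocks_small[OF P] by (auto simp: blocks_def)
  have pt: "Pt = Pt'" using sPt[OF P] sPt[OF Q] bl by simp
  have seq: "set Ph = set Ph'" using sPh[OF P] sPh[OF Q] bl by simp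
  have sorted: "sorted_wrt (<) (map (key w) Ph)"
    if P: "(Ph, Pt) \<in> rsc r n" and M: "Mc n Ph Pt w" for Ph Pt
  proof -
    have "key w (Ph ! l) < key w (Ph ! m)" if "l < m" "m < length Ph" for l m
    proof -
      have "Ph ! l \<in> blocks (Ph,Pt)" "Ph ! m \<in> blocks (Ph,Pt)" using that by (auto simp: blocks_def)
      then have "Min (Ph ! l) \<in> Ph ! l" "Min (Ph ! m) \<in> Ph ! m" using Mc_key(2)[OF P M] by auto
      then show ?thesis using M that unfolding Mc_def key_def by blast
    qed
    then show ?thesis by (simp add: sorted_wrt_iff_nth_less)
  qed
  have inj: "inj_on (key w) (blocks (Ph,Pt))"
    using Mc_key(1)[OF P M] unfolding inj_on_def by metis
  have "map (key w) Ph = map (key w) Ph'"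
  proof (rule sorted_distinct_set_unique)
    show "sorted (map (key w) Ph)" "distinct (map (key w) Ph)"
      using sorted[OF P M] by (simp_all add: strict_sorted_iff)
    show "sorted (map (key w) Ph')" "distinct (map (key w) Ph')"
      using sorted[OF Q M'] by (simp_all add: strict_sorted_iff)
    show "set (map (key w) Ph) = set (map (key w) Ph')" using seq by simp
  qed
  moreover have "inj_on (key w) (set Ph \<union> set Ph')" using inj_on_subset[OF inj] seq
    by (auto simp: blocks_def)
  ultimately have "Ph = Ph'" using map_inj_on by blast
  with pt show ?thesis by simp
qed

lemma rsc_Ph_block: "(Ph,Pt) \<in> rsc r n \<Longrightarrow> i < length Ph \<Longrightarrow> Ph ! i \<in> blocks (Ph,Pt)"
  by (simp add: blocks_def)

lemma witness_exists:
  assumes P: "(Ph, Pt) \<in> rsc r n"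
  shows "\<exists>w. Mc n Ph Pt w"
proof -
  define bl where "bl j = (THE B. B \<in> blocks (Ph,Pt) \<and> j \<in> B)" for j
  define g where "g B = (if B \<in> set Ph then Suc (THE i. i < length Ph \<and> Ph ! i = B) else length Ph + Min B)" for B
  define w where "w = map (\<lambda>j. g (bl j)) [1..<n+1]"
  have bl: "bl j \<in> blocks (Ph,Pt) \<and> j \<in> bl j" if jn: "j \<in> {1..n}" for j
  proof -
    obtain B where "B \<in> blocks (Ph,Pt)" "j \<in> B" using blocks_cover[OF P jn] by blast
    then show ?thesis unfolding bl_def using blocks_uniq[OF P]
      by (metis (no_types, lifting) theI)
  qed
  have bl_eq: "bl j = B" if "B \<in> blocks (Ph,Pt)" "j \<in> B" for j B
  proof -
    have "j \<in> {1..n}" using blocks_sub[OF P that(1)] that(2) by auto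
    then show ?thesis using bl blocks_uniq[OF P] that by metis
  qed
  have dist: "distinct Ph" by (rule rsc_distinct[OF P])
  have gPh: "g (Ph ! i) = Suc i" if "i < length Ph" for i
  proof -
    have "(THE i'. i' < length Ph \<and> Ph ! i' = Ph ! i) = i"
      using dist that by (auto simp: nth_eq_iff_index_eq)
    then show ?thesis using that unfolding g_def by simp
  qed
  have gpos: "length Ph < g B" if "B \<in> blocks (Ph,Pt)" "B \<notin> set Ph" for B
  proof -
    have "Min B \<in> B" using rsc_finite_blocks(2)[OF P that(1)] blocks_ne[OF P that(1)] by simp
    then have "Min B \<ge> 1" using blocks_sub[OF P that(1)] by auto
    then show ?thesis using that unfolding g_def by simp
  qed
  have ginj: "B = B'" if "B \<in> blocks (Ph,Pt)" "B' \<in> blocks (Ph,Pt)" "g B = g B'" for B B'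
  proof (cases "B \<in> set Ph")
    case True
    then obtain i where i: "i < length Ph" "B = Ph ! i" by (auto simp: in_set_conv_nth)
    show ?thesis
    proof (cases "B' \<in> set Ph")
      case True
      then obtain i' where "i' < length Ph" "B' = Ph ! i'" by (auto simp: in_set_conv_nth)
      then show ?thesis using i gPh that(3) by auto
    next
      case False
      then show ?thesis using gpos[OF that(2) False] gPh[OF i(1)] i that(3) by auto
    qed
  next
    case False
    show ?thesis
    proof (cases "B' \<in> set Ph")
      case True
      then obtain i' where i': "i' < length Ph" "B' = Ph ! i'" by (auto simp: in_set_conv_nth)
      then show ?thesis using gpos[OF that(1) False] gPh[OF i'(1)] that(3) by auto
    next
      case False': False
      then have "Min B = Min B'" using False that(3) unfolding g_def by simp
      moreover have "Min B \<in> B" "Min B' \<in> B'"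
        using rsc_finite_blocks(2)[OF P] blocks_ne[OF P] that(1,2) by auto
      ultimately show ?thesis using blocks_uniq[OF P that(1,2)] by metis
    qed
  qed
  have wj: "w ! (j-1) = g (bl j)" if "j \<in> {1..n}" for j
  proof -
    have "j - 1 < length [1..<n+1]" using that by auto
    then have "w ! (j-1) = g (bl ([1..<n+1] ! (j-1)))" unfolding w_def by (rule nth_map)
    also have "[1..<n+1] ! (j-1) = j" using that by (simp del: upt_Suc)
    finally show ?thesis .
  qed
  have "Mc n Ph Pt w"
    unfolding Mc_def
  proof (intro conjI ballI allI impI)
    show "length w = n" unfolding w_def by simp
    have gnz: "g B \<noteq> 0" if "B \<in> blocks (Ph,Pt)" for B
      using gpos[OF that] unfolding g_def by (cases "B \<in> set Ph") auto
    show "0 \<notin> set w" unfolding w_def using gnz bl by fastforce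
  next
    fix j k assume j: "j \<in> {1..n}" and k: "k \<in> {1..n}"
    show "(w ! (j-1) = w ! (k-1)) \<longleftrightarrow> same_block Ph Pt j k"
    proof
      assume "w ! (j-1) = w ! (k-1)"
      then have "bl j = bl k" using wj[OF j] wj[OF k] ginj bl[OF j] bl[OF k] by metis
      then show "same_block Ph Pt j k" using bl[OF j] bl[OF k] by (auto simp: same_block_blocks)
    next
      assume "same_block Ph Pt j k"
      then obtain B where "B \<in> blocks (Ph,Pt)" "j \<in> B" "k \<in> B" by (auto simp: same_block_blocks)
      then show "w ! (j-1) = w ! (k-1)" using wj[OF j] wj[OF k] bl_eq by metis
    qed
  next
    fix l m j k assume a: "l < m \<and> m < length Ph \<and> j \<in> Ph ! l \<and> k \<in> Ph ! m"
    have "bl j = Ph ! l" "bl k = Ph ! m" using a bl_eq rsc_Ph_block[OF P] by auto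
    moreover have "j \<in> {1..n}" "k \<in> {1..n}" using a blocks_sub[OF P rsc_Ph_block[OF P]]
      by (meson less_trans subsetD)+
    ultimately show "w ! (j-1) < w ! (k-1)" using wj gPh a by auto
  qed
  then show ?thesis by blast
qed

lemma type_exists:
  assumes len: "length w = n" and nz: "0 \<notin> set w"
  shows "\<exists>Ph Pt. (Ph, Pt) \<in> rsc r n \<and> Mc n Ph Pt w"
proof -
  define cls where "cls v = {j\<in>{1..n}. w ! (j-1) = v}" for v
  define big where "big = filter (\<lambda>v. r \<le> card (cls v)) (sorted_list_of_set (set w))"
  define Ph where "Ph = map cls big"
  define Pt where "Pt = cls ` {v\<in>set w. card (cls v) < r}"
  have cls_ne: "cls v \<noteq> {}" if vw: "v \<in> set w" for v
  proof -
    obtain i where "i < length w" "w ! i = v" using vw by (auto simp: in_set_conv_nth)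
    then have "Suc i \<in> cls v" using len unfolding cls_def by auto
    then show ?thesis by auto
  qed
  have in_cls: "j \<in> cls (w ! (j-1))" "w ! (j-1) \<in> set w" if "j \<in> {1..n}" for j
    using that len unfolding cls_def by auto
  have cls_disj: "cls v \<inter> cls v' = {}" if "v \<noteq> v'" for v v'
    using that unfolding cls_def by auto
  have sb: "sorted_wrt (<) big" unfolding big_def
    by (simp add: sorted_wrt_filter)
  have db: "distinct big" using sb by (simp add: strict_sorted_iff)
  have setbig: "set big = {v\<in>set w. r \<le> card (cls v)}" unfolding big_def by auto
  define A where "A = \<Union>(set Ph)"
  have A_eq: "A = \<Union>(cls ` {v\<in>set w. r \<le> card (cls v)})" unfolding A_def Ph_def using setbig by simp
  have rs: "(Ph, Pt) \<in> rsc r n"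
    unfolding rsc_def r_set_composition_def set_composition_def mem_Collect_eq prod.case
  proof (intro exI[of _ A] conjI ballI allI impI)
    show "A \<subseteq> {1..n}" unfolding A_eq cls_def by auto
    show "B \<noteq> {}" if "B \<in> set Ph" for B using that cls_ne setbig unfolding Ph_def by auto
    show "Ph ! i \<inter> Ph ! j = {}" if "i < length Ph" "j < length Ph" "i \<noteq> j" for i j
    proof -
      have "big ! i \<noteq> big ! j" using db that by (simp add: Ph_def nth_eq_iff_index_eq)
      then show ?thesis using that cls_disj unfolding Ph_def by simp
    qed
    show "\<Union>(set Ph) = A" unfolding A_def ..
    show "r \<le> card B" if "B \<in> set Ph" for B using that setbig unfolding Ph_def by auto
    show "card B < r" if "B \<in> Pt" for B using that unfolding Pt_def by auto
    show "partition_on ({1..n} - A) Pt"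
    proof (rule partition_onI)
      show "\<Union>Pt = {1..n} - A"
      proof (intro set_eqI iffI)
        fix j assume "j \<in> \<Union>Pt"
        then obtain v where v: "v \<in> set w" "card (cls v) < r" "j \<in> cls v" unfolding Pt_def by auto
        have "j \<notin> cls v'" if "r \<le> card (cls v')" for v' using cls_disj[of v v'] v that
          by (cases "v = v'") auto
        then show "j \<in> {1..n} - A" using v unfolding A_eq cls_def by auto
      next
        fix j assume j: "j \<in> {1..n} - A"
        then have "card (cls (w ! (j-1))) < r" using in_cls[of j] unfolding A_eq by force
        then show "j \<in> \<Union>Pt" using in_cls[of j] j unfolding Pt_def by blast
      qed
      show "disjnt p q" if "p \<in> Pt" "q \<in> Pt" "p \<noteq> q" for p q
        using that cls_disj unfolding Pt_def disjnt_def by (metis (no_types, lifting) imageE)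
      show "{} \<notin> Pt" using cls_ne unfolding Pt_def by auto
    qed
  qed
  have "Mc n Ph Pt w"
    unfolding Mc_def
  proof (intro conjI ballI allI impI)
    show "length w = n" "0 \<notin> set w" using len nz by auto
  next
    fix j k assume j: "j \<in> {1..n}" and k: "k \<in> {1..n}"
    show "(w ! (j-1) = w ! (k-1)) \<longleftrightarrow> same_block Ph Pt j k"
    proof
      assume e: "w ! (j-1) = w ! (k-1)"
      let ?v = "w ! (j-1)"
      have "cls ?v \<in> set Ph \<union> Pt" using in_cls[OF j] setbig unfolding Ph_def Pt_def
        by (cases "r \<le> card (cls ?v)") auto
      moreover have "j \<in> cls ?v" "k \<in> cls ?v" using in_cls[OF j] in_cls[OF k] e by auto
      ultimately show "same_block Ph Pt j k" unfolding same_block_def by blast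
    next
      assume "same_block Ph Pt j k"
      then obtain B where B: "B \<in> set Ph \<union> Pt" "j \<in> B" "k \<in> B" unfolding same_block_def by blast
      then obtain v where "B = cls v" unfolding Ph_def Pt_def by auto
      then show "w ! (j-1) = w ! (k-1)" using B unfolding cls_def by auto
    qed
  next
    fix l m j k assume a: "l < m \<and> m < length Ph \<and> j \<in> Ph ! l \<and> k \<in> Ph ! m"
    then have "w ! (j-1) = big ! l" "w ! (k-1) = big ! m" unfolding Ph_def cls_def by auto
    moreover have "big ! l < big ! m" using sb a unfolding Ph_def by (simp add: sorted_wrt_iff_nth_less)
    ultimately show "w ! (j-1) < w ! (k-1)" by simp
  qed
  with rs show ?thesis by blast
qed

lemma gsum_fst: "fst (gsum t G H) = fst G \<union> fst H"
  by (cases G; cases H) (simp add: gsum_def)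

lemma gsum_snd: "snd (gsum t G H) a b =
  (if a \<in> fst G \<and> b \<in> fst G then snd G a b else if a \<in> fst H \<and> b \<in> fst H then snd H a b
   else if a \<in> fst G \<and> b \<in> fst H then Some t else None)"
  by (cases G; cases H) (simp add: gsum_def)

lemma gsum_list_fst: "fst (gsum_list t Gs) = \<Union>(fst ` set Gs)"
  by (induction Gs) (auto simp: gsum_list_def empty_graph_def gsum_fst)

lemma gsum_list_snd:
  assumes "\<forall>i<length Gs. \<forall>j<length Gs. i \<noteq> j \<longrightarrow> fst (Gs ! i) \<inter> fst (Gs ! j) = {}"
    and "i < length Gs" "j < length Gs" "a \<in> fst (Gs ! i)" "b \<in> fst (Gs ! j)"
  shows "snd (gsum_list t Gs) a b = (if i = j then snd (Gs ! i) a b else if i < j then Some t else None)"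
  using assms
proof (induction Gs arbitrary: i j)
  case Nil
  then show ?case by simp
next
  case (Cons G Gs)
  have GL: "gsum_list t (G # Gs) = gsum t G (gsum_list t Gs)" by (simp add: gsum_list_def)
  have dis: "\<forall>i<length Gs. \<forall>j<length Gs. i \<noteq> j \<longrightarrow> fst (Gs ! i) \<inter> fst (Gs ! j) = {}"
    using Cons.prems(1) by (metis Suc_less_eq length_Cons nat.inject nth_Cons_Suc)
  have notin: "x \<notin> fst G" if "k < length Gs" "x \<in> fst (Gs ! k)" for k x
    using Cons.prems(1)[rule_format, of 0 "Suc k"] that by auto
  have notin2: "x \<notin> fst (gsum_list t Gs)" if "x \<in> fst G" for x
    using notin that by (auto simp: gsum_list_fst in_set_conv_nth)
  have in2: "x \<in> fst (gsum_list t Gs)" if "k < length Gs" "x \<in> fst (Gs ! k)" for k x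
    using that nth_mem unfolding gsum_list_fst by blast
  show ?case
  proof (cases i)
    case 0
    note i0 = 0
    show ?thesis
    proof (cases j)
      case 0
      then show ?thesis using i0 Cons.prems GL by (simp add: gsum_snd)
    next
      case (Suc j')
      have bj: "j' < length Gs" "b \<in> fst (Gs ! j')" using Cons.prems(3,5) Suc by auto
      have aG: "a \<in> fst G" using Cons.prems(4) i0 by simp
      have "b \<notin> fst G" "b \<in> fst (gsum_list t Gs)" "a \<notin> fst (gsum_list t Gs)"
        using notin[OF bj] in2[OF bj] notin2[OF aG] by auto
      then show ?thesis using i0 Suc Cons.prems GL by (simp add: gsum_snd)
    qed
  next
    case (Suc i')
    note iS = Suc
    have ai: "i' < length Gs" "a \<in> fst (Gs ! i')" using Cons.prems(2,4) iS by auto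
    have a1: "a \<notin> fst G" "a \<in> fst (gsum_list t Gs)" using notin[OF ai] in2[OF ai] by auto
    show ?thesis
    proof (cases j)
      case 0
      then have bG: "b \<in> fst G" using Cons.prems(5) by simp
      then have "b \<notin> fst (gsum_list t Gs)" using notin2 by auto
      note bG this
      then show ?thesis using a1 iS 0 GL by (simp add: gsum_snd)
    next
      case (Suc j')
      have bj: "j' < length Gs" "b \<in> fst (Gs ! j')" using Cons.prems(3,5) Suc by auto
      have b1: "b \<notin> fst G" "b \<in> fst (gsum_list t Gs)" using notin[OF bj] in2[OF bj] by auto
      have "snd (gsum_list t Gs) a b = (if i' = j' then snd (Gs ! i') a b else if i' < j' then Some t else None)"
        using Cons.IH[OF dis, of i' j'] Cons.prems iS Suc by simp
      then show ?thesis using a1 b1 iS Suc GL by (simp add: gsum_snd)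
    qed
  qed
qed

lemma cycle_fst: "fst (cycle_graph B) = B"
  by (simp add: cycle_graph_def Let_def)

lemma cycle_snd: "snd (cycle_graph B) a b = None \<or> snd (cycle_graph B) a b = Some Double"
  by (simp add: cycle_graph_def Let_def)

lemma cycle_const:
  assumes fin: "finite B"
    and le: "\<And>a b. a \<in> B \<Longrightarrow> b \<in> B \<Longrightarrow> snd (cycle_graph B) a b = Some Double \<Longrightarrow> (k a :: nat) \<le> k b"
    and a: "a \<in> B" and b: "b \<in> B"
  shows "k a = k b"
proof (cases "card B \<ge> 2")
  case False
  then have "card B \<le> 1" by simp
  then have "a = b" using a b fin by (auto simp: card_le_Suc0_iff_eq)
  then show ?thesis by simp
next
  case True
  define xs where "xs = sorted_list_of_set B"
  define L where "L = length xs"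
  have L1: "L = card B" using fin unfolding L_def xs_def by simp
  have L2: "set xs = B" using fin unfolding xs_def by simp
  have Lpos: "L \<ge> 2" using True L1 by simp
  have edge: "k (xs ! i) \<le> k (xs ! ((i + 1) mod L))" if i: "i < L" for i
  proof (rule le)
    show "xs ! i \<in> B" using i L2 unfolding L_def using nth_mem by blast
    have "(i + 1) mod L < L" using Lpos by simp
    then show "xs ! ((i + 1) mod L) \<in> B" using L2 unfolding L_def using nth_mem by blast
    have "\<exists>i'<length xs. xs ! i = xs ! i' \<and> xs ! ((i + 1) mod L) = xs ! ((i' + 1) mod length xs)"
      using i unfolding L_def by blast
    then show "snd (cycle_graph B) (xs ! i) (xs ! ((i + 1) mod L)) = Some Double"
      using True unfolding cycle_graph_def Let_def xs_def[symmetric] L_def by simp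
  qed
  have mono: "k (xs ! i) \<le> k (xs ! j)" if "i \<le> j" "j < L" for i j
    using that
  proof (induction j)
    case 0 then show ?case by simp
  next
    case (Suc j)
    show ?case
    proof (cases "i = Suc j")
      case True then show ?thesis by simp
    next
      case False
      then have "k (xs ! i) \<le> k (xs ! j)" using Suc by simp
      also have "k (xs ! j) \<le> k (xs ! Suc j)"
      proof -
        have "j < L" "Suc j mod L = Suc j" using Suc.prems by auto
        then show ?thesis using edge[of j] by simp
      qed
      finally show ?thesis .
    qed
  qed
  have wrap: "k (xs ! (L - 1)) \<le> k (xs ! 0)"
  proof -
    have "(L - 1 + 1) mod L = 0" using Lpos by simp
    then show ?thesis using edge[of "L - 1"] Lpos by simp
  qed
  have all: "k (xs ! i) = k (xs ! 0)" if "i < L" for i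
  proof -
    have "i \<le> L - 1" using that by simp
    then have "k (xs ! i) \<le> k (xs ! (L - 1))" using mono[of i "L - 1"] Lpos by simp
    moreover have "k (xs ! 0) \<le> k (xs ! i)" using mono[of 0 i] that by simp
    ultimately show ?thesis using wrap by linarith
  qed
  have "a \<in> set xs" "b \<in> set xs" using a b L2 by auto
  then obtain i j where "i < L" "a = xs ! i" "j < L" "b = xs ! j" unfolding L_def
    by (auto simp: in_set_conv_nth)
  then show ?thesis using all[of i] all[of j] by (simp only:)
qed

lemma enum_blocks_props: "finite P \<Longrightarrow> distinct (enum_blocks P) \<and> set (enum_blocks P) = P"
proof -
  assume "finite P"
  then obtain xs where "distinct xs \<and> set xs = P" using finite_distinct_list by blast
  then show ?thesis unfolding enum_blocks_def by (rule someI)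
qed

lemma fbar_edges:
  assumes P: "(Ph, Pt) \<in> rsc r n"
  defines "E \<equiv> snd (Fbar_graph (Ph, Pt))"
  shows fbar_V: "fst (Fbar_graph (Ph, Pt)) = {1..n}"
    and E_cyc: "\<And>B a b. B \<in> set Ph \<union> Pt \<Longrightarrow> a \<in> B \<Longrightarrow> b \<in> B \<Longrightarrow> E a b = snd (cycle_graph B) a b"
    and E_ph: "\<And>i j a b. i < j \<Longrightarrow> j < length Ph \<Longrightarrow> a \<in> Ph ! i \<Longrightarrow> b \<in> Ph ! j \<Longrightarrow> E a b = Some Double"
    and E_mix: "\<And>a b. a \<in> \<Union>(set Ph) \<Longrightarrow> b \<in> \<Union>Pt \<Longrightarrow> E a b = Some Dashed"
    and E_pt: "\<And>B B' a b. B \<in> Pt \<Longrightarrow> B' \<in> Pt \<Longrightarrow> B \<noteq> B' \<Longrightarrow> a \<in> B \<Longrightarrow> b \<in> B' \<Longrightarrow>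
                 E a b = Some Dashed \<or> E b a = Some Dashed"
    and E_cases: "\<And>a b. a \<in> {1..n} \<Longrightarrow> b \<in> {1..n} \<Longrightarrow>
       E a b = None \<or>
       (E a b = Some Double \<and> ((\<exists>B\<in>set Ph \<union> Pt. a \<in> B \<and> b \<in> B) \<or>
           (\<exists>i j. i < j \<and> j < length Ph \<and> a \<in> Ph ! i \<and> b \<in> Ph ! j))) \<or>
       (E a b = Some Dashed \<and> ((\<exists>B\<in>Pt. a \<in> B \<and> b \<notin> B) \<or> (\<exists>B\<in>Pt. b \<in> B \<and> a \<notin> B)))"
proof -
  note D = rscD[OF P]
  have pt: "\<Union>Pt = {1..n} - \<Union>(set Ph)" "disjoint Pt" "{} \<notin> Pt"
    using D(5) unfolding partition_on_def by auto
  have finPt: "finite Pt" using rsc_finite_blocks(1)[OF P] unfolding blocks_def by auto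
  define Pl where "Pl = enum_blocks Pt"
  have Pl: "distinct Pl" "set Pl = Pt" using enum_blocks_props[OF finPt] unfolding Pl_def by auto
  define G1 where "G1 = gsum_list Double (map cycle_graph Ph)"
  define G2 where "G2 = gsum_list Dashed (map cycle_graph Pl)"
  have FG: "Fbar_graph (Ph, Pt) = gsum Dashed G1 G2" unfolding Fbar_graph_def G1_def G2_def Pl_def by simp
  have V1: "fst G1 = \<Union>(set Ph)" unfolding G1_def gsum_list_fst by (simp add: cycle_fst image_image)
  have V2: "fst G2 = \<Union>Pt" unfolding G2_def gsum_list_fst using Pl(2) by (simp add: cycle_fst image_image)
  show "fst (Fbar_graph (Ph, Pt)) = {1..n}" using FG V1 V2 pt(1) D(4) by (auto simp: gsum_fst)
  have dis1: "\<forall>i<length (map cycle_graph Ph). \<forall>j<length (map cycle_graph Ph). i \<noteq> j \<longrightarrow>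
      fst (map cycle_graph Ph ! i) \<inter> fst (map cycle_graph Ph ! j) = {}"
    using D(2) by (simp add: cycle_fst)
  have Pl_disj: "Pl ! i \<inter> Pl ! j = {}" if "i < length Pl" "j < length Pl" "i \<noteq> j" for i j
  proof -
    have "Pl ! i \<noteq> Pl ! j" using Pl(1) that by (simp add: nth_eq_iff_index_eq)
    moreover have "Pl ! i \<in> Pt" "Pl ! j \<in> Pt" using Pl(2) that nth_mem by blast+
    ultimately show ?thesis using pt(2) by (meson disjointD disjnt_def)
  qed
  have dis2: "\<forall>i<length (map cycle_graph Pl). \<forall>j<length (map cycle_graph Pl). i \<noteq> j \<longrightarrow>
      fst (map cycle_graph Pl ! i) \<inter> fst (map cycle_graph Pl ! j) = {}"
    using Pl_disj by (simp add: cycle_fst)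
  have E1: "snd G1 a b = (if i = j then snd (cycle_graph (Ph ! i)) a b else if i < j then Some Double else None)"
    if "i < length Ph" "j < length Ph" "a \<in> Ph ! i" "b \<in> Ph ! j" for i j a b
    using gsum_list_snd[OF dis1, of i j a b Double] that unfolding G1_def by (simp add: cycle_fst)
  have E2: "snd G2 a b = (if i = j then snd (cycle_graph (Pl ! i)) a b else if i < j then Some Dashed else None)"
    if "i < length Pl" "j < length Pl" "a \<in> Pl ! i" "b \<in> Pl ! j" for i j a b
    using gsum_list_snd[OF dis2, of i j a b Dashed] that unfolding G2_def by (simp add: cycle_fst)
  have Eg: "E a b = (if a \<in> fst G1 \<and> b \<in> fst G1 then snd G1 a b else if a \<in> fst G2 \<and> b \<in> fst G2 then snd G2 a b
   else if a \<in> fst G1 \<and> b \<in> fst G2 then Some Dashed else None)" for a b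
    unfolding E_def FG gsum_snd ..
  have disA: "\<Union>(set Ph) \<inter> \<Union>Pt = {}" using pt(1) by auto
  have inPh: "\<exists>i<length Ph. a \<in> Ph ! i" if "a \<in> \<Union>(set Ph)" for a
    using that by (auto simp: in_set_conv_nth)
  have inPl: "\<exists>i<length Pl. a \<in> Pl ! i" if "a \<in> \<Union>Pt" for a
    using that Pl(2) by (auto simp: in_set_conv_nth)
  show Ecyc: "E a b = snd (cycle_graph B) a b" if BP: "B \<in> set Ph \<union> Pt" "a \<in> B" "b \<in> B" for B a b
  proof (cases "B \<in> set Ph")
    case True
    then obtain i where i: "i < length Ph" "B = Ph ! i" by (auto simp: in_set_conv_nth)
    have "a \<in> fst G1" "b \<in> fst G1" using V1 True BP by auto
    then show ?thesis using Eg E1[OF i(1) i(1)] i BP by simp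
  next
    case False
    then have "B \<in> Pt" using that by simp
    then obtain i where i: "i < length Pl" "B = Pl ! i" using Pl(2) by (auto simp: in_set_conv_nth)
    have "a \<in> fst G2" "b \<in> fst G2" using V2 \<open>B \<in> Pt\<close> BP by auto
    moreover have "a \<notin> fst G1" using V1 disA \<open>B \<in> Pt\<close> BP by auto
    ultimately show ?thesis using Eg E2[OF i(1) i(1)] i BP by simp
  qed
  show Eph: "E a b = Some Double" if "i < j" "j < length Ph" "a \<in> Ph ! i" "b \<in> Ph ! j" for i j a b
  proof -
    have "a \<in> fst G1" "b \<in> fst G1" using V1 that nth_mem by (metis Union_iff less_trans)+
    then show ?thesis using Eg E1[of i j a b] that by simp
  qed
  show Emix: "E a b = Some Dashed" if "a \<in> \<Union>(set Ph)" "b \<in> \<Union>Pt" for a b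
  proof -
    have "a \<in> fst G1" "b \<in> fst G2" "b \<notin> fst G1" "a \<notin> fst G2" using V1 V2 disA that by auto
    then show ?thesis using Eg by simp
  qed
  show "E a b = Some Dashed \<or> E b a = Some Dashed"
    if BB: "B \<in> Pt" "B' \<in> Pt" "B \<noteq> B'" "a \<in> B" "b \<in> B'" for B B' a b
  proof -
    have "B \<in> set Pl" "B' \<in> set Pl" using Pl(2) BB(1,2) by auto
    then obtain i j where i: "i < length Pl" "B = Pl ! i" and j: "j < length Pl" "B' = Pl ! j"
      by (auto simp: in_set_conv_nth)
    have ij: "i \<noteq> j" using i(2) j(2) BB(3) by blast
    have "a \<in> fst G2" "b \<in> fst G2" "a \<notin> fst G1" "b \<notin> fst G1" using V1 V2 disA BB by auto
    then have e1: "E a b = snd G2 a b" and e2: "E b a = snd G2 b a" using Eg[of a b] Eg[of b a] by simp_all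
    have a': "a \<in> Pl ! i" and b': "b \<in> Pl ! j" using i j BB by simp_all
    show ?thesis
    proof (cases "i < j")
      case True
      then show ?thesis using e1 E2[OF i(1) j(1) a' b'] ij by simp
    next
      case False
      then show ?thesis using e2 E2[OF j(1) i(1) b' a'] ij by simp
    qed
  qed
  show "E a b = None \<or>
       (E a b = Some Double \<and> ((\<exists>B\<in>set Ph \<union> Pt. a \<in> B \<and> b \<in> B) \<or>
           (\<exists>i j. i < j \<and> j < length Ph \<and> a \<in> Ph ! i \<and> b \<in> Ph ! j))) \<or>
       (E a b = Some Dashed \<and> ((\<exists>B\<in>Pt. a \<in> B \<and> b \<notin> B) \<or> (\<exists>B\<in>Pt. b \<in> B \<and> a \<notin> B)))"
    if a: "a \<in> {1..n}" and b: "b \<in> {1..n}" for a b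
  proof (cases "a \<in> \<Union>(set Ph)")
    case aT: True
    then obtain i where i: "i < length Ph" "a \<in> Ph ! i" using inPh by blast
    show ?thesis
    proof (cases "b \<in> \<Union>(set Ph)")
      case True
      then obtain j where j: "j < length Ph" "b \<in> Ph ! j" using inPh by blast
      have e: "E a b = snd G1 a b" using Eg aT True V1 by simp
      consider "i = j" | "i < j" | "j < i" by linarith
      then show ?thesis
      proof cases
        case 1
        then have c: "E a b = snd (cycle_graph (Ph ! i)) a b" using e E1[OF i(1) j(1) i(2) j(2)] by simp
        have B: "Ph ! i \<in> set Ph \<union> Pt" "a \<in> Ph ! i" "b \<in> Ph ! i" using i j 1 by auto
        from cycle_snd[of "Ph ! i" a b] show ?thesis
        proof
          assume "snd (cycle_graph (Ph ! i)) a b = None" then show ?thesis using c by simp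
        next
          assume "snd (cycle_graph (Ph ! i)) a b = Some Double"
          then have "E a b = Some Double" using c by simp
          then show ?thesis using B by blast
        qed
      next
        case 2
        then have "E a b = Some Double" using e E1[OF i(1) j(1) i(2) j(2)] by simp
        then show ?thesis using 2 i j by blast
      next
        case 3
        then have "E a b = None" using e E1[OF i(1) j(1) i(2) j(2)] by simp
        then show ?thesis by blast
      qed
    next
      case False
      then have "b \<in> \<Union>Pt" using b pt(1) by auto
      then obtain B where "B \<in> Pt" "b \<in> B" by auto
      moreover have "a \<notin> B" using aT disA calculation by auto
      moreover have "E a b = Some Dashed" using Emix[OF aT \<open>b \<in> \<Union>Pt\<close>] .
      ultimately show ?thesis by blast
    qed
  next
    case aF: False
    then have aPt: "a \<in> \<Union>Pt" using a pt(1) by auto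
    then obtain i where i: "i < length Pl" "a \<in> Pl ! i" using inPl by blast
    have aG: "a \<notin> fst G1" "a \<in> fst G2" using aF aPt V1 V2 by auto
    show ?thesis
    proof (cases "b \<in> \<Union>(set Ph)")
      case True
      then have "b \<notin> fst G2" using disA V2 by auto
      then have "E a b = None" using Eg[of a b] aG by simp
      then show ?thesis by blast
    next
      case False
      then have bPt: "b \<in> \<Union>Pt" using b pt(1) by auto
      then obtain j where j: "j < length Pl" "b \<in> Pl ! j" using inPl by blast
      have e: "E a b = snd G2 a b" using Eg aG bPt V2 by simp
      have PlPt: "Pl ! i \<in> Pt" "Pl ! j \<in> Pt" using Pl(2) i j nth_mem by blast+
      show ?thesis
      proof (cases "i = j")
        case True
        then have c: "E a b = snd (cycle_graph (Pl ! i)) a b" using e E2[OF i(1) j(1) i(2) j(2)] by simp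
        have B: "Pl ! i \<in> set Ph \<union> Pt" "a \<in> Pl ! i" "b \<in> Pl ! i" using i j True PlPt by auto
        from cycle_snd[of "Pl ! i" a b] show ?thesis
        proof
          assume "snd (cycle_graph (Pl ! i)) a b = None" then show ?thesis using c by simp
        next
          assume "snd (cycle_graph (Pl ! i)) a b = Some Double"
          then have "E a b = Some Double" using c by simp
          then show ?thesis using B by blast
        qed
      next
        case False
        then have nb: "b \<notin> Pl ! i" using Pl_disj[OF i(1) j(1) False] j by auto
        have "E a b = None \<or> E a b = Some Dashed" using e E2[OF i(1) j(1) i(2) j(2)] False by simp
        then show ?thesis using nb i(2) PlPt(1) by blast
      qed
    qed
  qed
qed

definition Cc :: "nat set list \<Rightarrow> nat set set \<Rightarrow> (nat \<Rightarrow> nat) \<Rightarrow> bool" where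
  "Cc Ph Pt k \<longleftrightarrow> (\<forall>B\<in>set Ph \<union> Pt. \<forall>a\<in>B. \<forall>b\<in>B. k a = k b) \<and>
     (\<forall>i j a b. i < j \<and> j < length Ph \<and> a \<in> Ph ! i \<and> b \<in> Ph ! j \<longrightarrow> k a \<le> k b) \<and>
     (\<forall>B\<in>Pt. \<forall>a\<in>B. \<forall>b\<in>\<Union>(set Ph \<union> Pt) - B. k a \<noteq> k b)"

lemma Cc_cong_imp:
  assumes eq: "\<And>j. j \<in> \<Union>(set Ph \<union> Pt) \<Longrightarrow> k j = k' j" and "Cc Ph Pt k"
  shows "Cc Ph Pt k'"
proof -
  have c1: "\<forall>B\<in>set Ph \<union> Pt. \<forall>a\<in>B. \<forall>b\<in>B. k a = k b"
   and c2: "\<forall>i j a b. i < j \<and> j < length Ph \<and> a \<in> Ph ! i \<and> b \<in> Ph ! j \<longrightarrow> k a \<le> k b"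
   and c3: "\<forall>B\<in>Pt. \<forall>a\<in>B. \<forall>b\<in>\<Union>(set Ph \<union> Pt) - B. k a \<noteq> k b"
    using assms(2) unfolding Cc_def by blast+
  have d1: "\<forall>B\<in>set Ph \<union> Pt. \<forall>a\<in>B. \<forall>b\<in>B. k' a = k' b"
  proof (intro ballI)
    fix B a b assume h: "B \<in> set Ph \<union> Pt" "a \<in> B" "b \<in> B"
    then have "a \<in> \<Union>(set Ph \<union> Pt)" "b \<in> \<Union>(set Ph \<union> Pt)" by blast+
    then have "k' a = k a" "k' b = k b" using eq by metis+
    moreover have "k a = k b" using c1 h by blast
    ultimately show "k' a = k' b" by simp
  qed
  have d2: "\<forall>i j a b. i < j \<and> j < length Ph \<and> a \<in> Ph ! i \<and> b \<in> Ph ! j \<longrightarrow> k' a \<le> k' b"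
  proof (intro allI impI)
    fix i j a b assume h: "i < j \<and> j < length Ph \<and> a \<in> Ph ! i \<and> b \<in> Ph ! j"
    then have "Ph ! i \<in> set Ph" "Ph ! j \<in> set Ph" by simp_all
    then have "a \<in> \<Union>(set Ph \<union> Pt)" "b \<in> \<Union>(set Ph \<union> Pt)" using h by blast+
    then have "k' a = k a" "k' b = k b" using eq by metis+
    moreover have "k a \<le> k b" using c2 h by blast
    ultimately show "k' a \<le> k' b" by simp
  qed
  have d3: "\<forall>B\<in>Pt. \<forall>a\<in>B. \<forall>b\<in>\<Union>(set Ph \<union> Pt) - B. k' a \<noteq> k' b"
  proof (intro ballI)
    fix B a b assume h: "B \<in> Pt" "a \<in> B" "b \<in> \<Union>(set Ph \<union> Pt) - B"
    then have "a \<in> \<Union>(set Ph \<union> Pt)" "b \<in> \<Union>(set Ph \<union> Pt)" by blast+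
    then have "k' a = k a" "k' b = k b" using eq by metis+
    moreover have "k a \<noteq> k b" using c3 h by blast
    ultimately show "k' a \<noteq> k' b" by simp
  qed
  show ?thesis unfolding Cc_def using d1 d2 d3 by blast
qed

lemma Cc_cong:
  assumes "\<And>j. j \<in> \<Union>(set Ph \<union> Pt) \<Longrightarrow> k j = k' j"
  shows "Cc Ph Pt k = Cc Ph Pt k'"
  using Cc_cong_imp[of Ph Pt k k'] Cc_cong_imp[of Ph Pt k' k] assms by metis

lemma rsc_U: "(Ph, Pt) \<in> rsc r n \<Longrightarrow> \<Union>(set Ph \<union> Pt) = {1..n}"
  using rsc_blocks(7) unfolding blocks_def by simp

lemma proper_iff:
  assumes P: "(Ph, Pt) \<in> rsc r n"
  shows "proper_colouring (Fbar_graph (Ph, Pt)) k \<longleftrightarrow>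
     k \<in> extensional {1..n} \<and> (\<forall>v\<in>{1..n}. 1 \<le> k v) \<and> Cc Ph Pt k"
proof -
  define E where "E = snd (Fbar_graph (Ph, Pt))"
  have FG: "Fbar_graph (Ph, Pt) = ({1..n}, E)" using fbar_V[OF P] unfolding E_def by (metis prod.collapse)
  note Ecyc = E_cyc[OF P, folded E_def] and Eph = E_ph[OF P, folded E_def]
    and Emix = E_mix[OF P, folded E_def] and Ept = E_pt[OF P, folded E_def]
    and Ecases = E_cases[OF P, folded E_def]
  have U: "\<Union>(set Ph \<union> Pt) = {1..n}" by (rule rsc_U[OF P])
  have pt: "\<Union>Pt = {1..n} - \<Union>(set Ph)" using rscD(5)[OF P] unfolding partition_on_def by auto
  let ?pc = "\<forall>a\<in>{1..n}. \<forall>b\<in>{1..n}. (E a b = Some Dashed \<longrightarrow> k a \<noteq> k b) \<and>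
          (E a b = Some Solid \<longrightarrow> k a < k b) \<and> (E a b = Some Double \<longrightarrow> k a \<le> k b)"
  have "?pc \<longleftrightarrow> Cc Ph Pt k"
  proof
    assume pc: ?pc
    show "Cc Ph Pt k" unfolding Cc_def
    proof (intro conjI ballI allI impI)
      fix B a b assume B: "B \<in> set Ph \<union> Pt" and a: "a \<in> B" and b: "b \<in> B"
      have Bs: "B \<subseteq> {1..n}" using B U by blast
      have fin: "finite B" using Bs finite_subset by blast
      show "k a = k b"
      proof (rule cycle_const[OF fin _ a b])
        fix x y assume "x \<in> B" "y \<in> B" "snd (cycle_graph B) x y = Some Double"
        then have xy: "x \<in> {1..n}" "y \<in> {1..n}" "E x y = Some Double" using Ecyc[OF B] Bs by auto
        from pc xy(1) xy(2) have "E x y = Some Double \<longrightarrow> k x \<le> k y" by blast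
        then show "k x \<le> k y" using xy(3) by blast
      qed
    next
      fix i j a b assume "i < j \<and> j < length Ph \<and> a \<in> Ph ! i \<and> b \<in> Ph ! j"
      then have h: "i < j" "j < length Ph" "a \<in> Ph ! i" "b \<in> Ph ! j" by auto
      have "a \<in> {1..n}" "b \<in> {1..n}" using h U nth_mem by (metis UnCI Union_iff less_trans)+
      from pc this have "E a b = Some Double \<longrightarrow> k a \<le> k b" by blast
      then show "k a \<le> k b" using Eph[OF h] by blast
    next
      fix B a b assume B: "B \<in> Pt" and a: "a \<in> B" and b: "b \<in> \<Union>(set Ph \<union> Pt) - B"
      have an: "a \<in> {1..n}" "b \<in> {1..n}" using B a b U by auto
      show "k a \<noteq> k b"
      proof (cases "b \<in> \<Union>(set Ph)")
        case True
        then have "E b a = Some Dashed" using Emix B a by blast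
        moreover from pc an have "E b a = Some Dashed \<longrightarrow> k b \<noteq> k a" by blast
        ultimately show ?thesis by metis
      next
        case False
        then obtain B' where B': "B' \<in> Pt" "b \<in> B'" using b by auto
        then have "B \<noteq> B'" using b by auto
        then have "E a b = Some Dashed \<or> E b a = Some Dashed" using Ept[OF B B'(1) _ a B'(2)] by simp
        moreover from pc an have "E b a = Some Dashed \<longrightarrow> k b \<noteq> k a" "E a b = Some Dashed \<longrightarrow> k a \<noteq> k b" by blast+
        ultimately show ?thesis by metis
      qed
    qed
  next
    assume C: "Cc Ph Pt k"
    have c1: "\<forall>B\<in>set Ph \<union> Pt. \<forall>a\<in>B. \<forall>b\<in>B. k a = k b"
     and c2: "\<forall>i j a b. i < j \<and> j < length Ph \<and> a \<in> Ph ! i \<and> b \<in> Ph ! j \<longrightarrow> k a \<le> k b"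
     and c3: "\<forall>B\<in>Pt. \<forall>a\<in>B. \<forall>b\<in>\<Union>(set Ph \<union> Pt) - B. k a \<noteq> k b"
      using C unfolding Cc_def by blast+
    show ?pc
    proof (intro ballI)
      fix a b assume a: "a \<in> {1..n}" and b: "b \<in> {1..n}"
      from Ecases[OF a b] show "(E a b = Some Dashed \<longrightarrow> k a \<noteq> k b) \<and>
          (E a b = Some Solid \<longrightarrow> k a < k b) \<and> (E a b = Some Double \<longrightarrow> k a \<le> k b)"
      proof (elim disjE conjE)
        assume "E a b = None" then show ?thesis by simp
      next
        assume e: "E a b = Some Double" and "\<exists>B\<in>set Ph \<union> Pt. a \<in> B \<and> b \<in> B"
        then have "k a = k b" using c1 by blast
        then show ?thesis using e by simp
      next
        assume e: "E a b = Some Double" and "\<exists>i j. i < j \<and> j < length Ph \<and> a \<in> Ph ! i \<and> b \<in> Ph ! j"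
        then have "k a \<le> k b" using c2 by blast
        then show ?thesis using e by simp
      next
        assume e: "E a b = Some Dashed" and "\<exists>B\<in>Pt. a \<in> B \<and> b \<notin> B"
        then obtain B where "B \<in> Pt" "a \<in> B" "b \<notin> B" by blast
        moreover have "b \<in> \<Union>(set Ph \<union> Pt)" using b U by simp
        ultimately have "k a \<noteq> k b" using c3 by blast
        then show ?thesis using e by simp
      next
        assume e: "E a b = Some Dashed" and "\<exists>B\<in>Pt. b \<in> B \<and> a \<notin> B"
        then obtain B where "B \<in> Pt" "b \<in> B" "a \<notin> B" by blast
        moreover have "a \<in> \<Union>(set Ph \<union> Pt)" using a U by simp
        ultimately have "k b \<noteq> k a" using c3 by blast
        then show ?thesis using e by simp
      qed
    qed
  qed
  then show ?thesis unfolding proper_colouring_def FG prod.case by blast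
qed

lemma Fbar_eq:
  assumes P: "(Ph, Pt) \<in> rsc r n"
  shows "Fbar (Ph, Pt) w = (if length w = n \<and> 0 \<notin> set w \<and> Cc Ph Pt (\<lambda>j. w ! (j-1)) then 1 else 0)"
proof -
  have U: "\<Union>(set Ph \<union> Pt) = {1..n}" by (rule rsc_U[OF P])
  have cV: "card (fst (Fbar_graph (Ph, Pt))) = n" using fbar_V[OF P] by simp
  define S where "S = {k. proper_colouring (Fbar_graph (Ph, Pt)) k \<and> w = map k [1..<n+1]}"
  have F: "Fbar (Ph, Pt) w = of_nat (card S)" unfolding Fbar_def Ypoly_def S_def cV ..
  define kw where "kw = restrict (\<lambda>j. w ! (j-1)) {1..n}"
  have mapk: "w = map k [1..<n+1] \<longleftrightarrow> length w = n \<and> (\<forall>j\<in>{1..n}. k j = w ! (j-1))" for k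
  proof
    assume w: "w = map k [1..<n+1]"
    have "k j = w ! (j-1)" if "j \<in> {1..n}" for j
    proof -
      have "j - 1 < length [1..<n+1]" using that by auto
      then have "w ! (j-1) = k ([1..<n+1] ! (j-1))" unfolding w by (rule nth_map)
      also have "[1..<n+1] ! (j-1) = j" using that by (simp del: upt_Suc)
      finally show ?thesis by simp
    qed
    moreover have "length w = n" using w by simp
    ultimately show "length w = n \<and> (\<forall>j\<in>{1..n}. k j = w ! (j-1))" by blast
  next
    assume h: "length w = n \<and> (\<forall>j\<in>{1..n}. k j = w ! (j-1))"
    show "w = map k [1..<n+1]"
    proof (rule nth_equalityI)
      show "length w = length (map k [1..<n+1])" using h by simp
      fix i assume "i < length w"
      then have i: "i < n" using h by simp
      then have "map k [1..<n+1] ! i = k (Suc i)" by (simp del: upt_Suc)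
      also have "\<dots> = w ! i" using h i by auto
      finally show "w ! i = map k [1..<n+1] ! i" by simp
    qed
  qed
  have Cw: "Cc Ph Pt k = Cc Ph Pt (\<lambda>j. w ! (j-1))" if "\<forall>j\<in>{1..n}. k j = w ! (j-1)" for k
    by (rule Cc_cong) (use that U in auto)
  have nz: "0 \<notin> set w \<longleftrightarrow> (\<forall>j\<in>{1..n}. 1 \<le> w ! (j-1))" if lw: "length w = n"
  proof
    assume "0 \<notin> set w"
    show "\<forall>j\<in>{1..n}. 1 \<le> w ! (j-1)"
    proof
      fix j assume j: "j \<in> {1..n}"
      then have "j - 1 < length w" using lw by auto
      then have "w ! (j-1) \<in> set w" by (rule nth_mem)
      then have "w ! (j-1) \<noteq> 0" using \<open>0 \<notin> set w\<close> by metis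
      then show "1 \<le> w ! (j-1)" by simp
    qed
  next
    assume h: "\<forall>j\<in>{1..n}. 1 \<le> w ! (j-1)"
    show "0 \<notin> set w"
    proof
      assume "0 \<in> set w"
      then obtain i where "i < n" "w ! i = 0" using lw by (auto simp: in_set_conv_nth)
      then show False using h[rule_format, of "Suc i"] by simp
    qed
  qed
  show ?thesis
  proof (cases "length w = n \<and> 0 \<notin> set w \<and> Cc Ph Pt (\<lambda>j. w ! (j-1))")
    case True
    have "S = {kw}"
    proof (intro set_eqI iffI)
      fix k assume "k \<in> S"
      then have pk: "proper_colouring (Fbar_graph (Ph, Pt)) k" and wk: "w = map k [1..<n+1]"
        unfolding S_def by auto
      have ext: "k \<in> extensional {1..n}" using pk proper_iff[OF P] by blast
      have eq: "\<forall>j\<in>{1..n}. k j = w ! (j-1)" using wk mapk by blast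
      have "k = kw"
      proof
        fix x show "k x = kw x"
        proof (cases "x \<in> {1..n}")
          case True then show ?thesis using eq unfolding kw_def by simp
        next
          case False
          have "k x = undefined" using ext False unfolding extensional_def by blast
          moreover have "kw x = undefined" using False unfolding kw_def by (simp only: restrict_apply if_False)
          ultimately show ?thesis by simp
        qed
      qed
      then show "k \<in> {kw}" by simp
    next
      fix k assume "k \<in> {kw}"
      then have k: "k = kw" by simp
      have eq: "\<forall>j\<in>{1..n}. k j = w ! (j-1)" unfolding k kw_def by simp
      have "proper_colouring (Fbar_graph (Ph, Pt)) k"
        unfolding proper_iff[OF P]
      proof (intro conjI)
        show "k \<in> extensional {1..n}" unfolding k kw_def by simp
        have "\<forall>j\<in>{1..n}. 1 \<le> w ! (j-1)" using nz True by blast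
        then show "\<forall>v\<in>{1..n}. 1 \<le> k v" using eq by simp
        show "Cc Ph Pt k" using Cw[OF eq] True by simp
      qed
      moreover have "w = map k [1..<n+1]" using mapk eq True by blast
      ultimately show "k \<in> S" unfolding S_def by simp
    qed
    then show ?thesis using F True by simp
  next
    case False
    have "S = {}"
    proof (rule ccontr)
      assume "S \<noteq> {}"
      then obtain k where "k \<in> S" by blast
      then have pk: "proper_colouring (Fbar_graph (Ph, Pt)) k" and wk: "w = map k [1..<n+1]"
        unfolding S_def by auto
      have eq: "\<forall>j\<in>{1..n}. k j = w ! (j-1)" and len: "length w = n" using wk mapk by blast+
      have "\<forall>v\<in>{1..n}. 1 \<le> k v" "Cc Ph Pt k" using pk proper_iff[OF P] by blast+
      then have "0 \<notin> set w" "Cc Ph Pt (\<lambda>j. w ! (j-1))" using nz[OF len] eq Cw[OF eq] by auto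
      then show False using False len by simp
    qed
    then show ?thesis using F False by simp
  qed
qed

lemma Mc_Cc:
  assumes P: "(Ph, Pt) \<in> rsc r n" and M: "Mc n Ph Pt w"
  shows "Cc Ph Pt (\<lambda>j. w ! (j-1))"
proof -
  have U: "\<Union>(set Ph \<union> Pt) = {1..n}" by (rule rsc_U[OF P])
  have eqv: "\<forall>j\<in>{1..n}. \<forall>k\<in>{1..n}. (w ! (j-1) = w ! (k-1)) \<longleftrightarrow> same_block Ph Pt j k"
    and ord: "\<forall>l m j k. l < m \<and> m < length Ph \<and> j \<in> Ph ! l \<and> k \<in> Ph ! m \<longrightarrow> w ! (j-1) < w ! (k-1)"
    using M unfolding Mc_def by blast+
  show ?thesis unfolding Cc_def
  proof (intro conjI ballI allI impI)
    fix B a b assume h: "B \<in> set Ph \<union> Pt" "a \<in> B" "b \<in> B"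
    then have "a \<in> {1..n}" "b \<in> {1..n}" using U by blast+
    moreover have "same_block Ph Pt a b" using h unfolding same_block_def by blast
    ultimately show "w ! (a-1) = w ! (b-1)" using eqv by blast
  next
    fix i j a b assume "i < j \<and> j < length Ph \<and> a \<in> Ph ! i \<and> b \<in> Ph ! j"
    then show "w ! (a-1) \<le> w ! (b-1)" using ord by (meson less_imp_le)
  next
    fix B a b assume h: "B \<in> Pt" "a \<in> B" "b \<in> \<Union>(set Ph \<union> Pt) - B"
    show "w ! (a-1) \<noteq> w ! (b-1)"
    proof
      assume e: "w ! (a-1) = w ! (b-1)"
      have "a \<in> {1..n}" "b \<in> {1..n}" using h U by blast+
      then have "same_block Ph Pt a b" using eqv e by blast
      then obtain B3 where B3: "B3 \<in> blocks (Ph,Pt)" "a \<in> B3" "b \<in> B3" by (auto simp: same_block_blocks)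
      have "B \<in> blocks (Ph,Pt)" using h by (simp add: blocks_def)
      then have "B3 = B" using blocks_uniq[OF P B3(1) _ B3(2) h(2)] by simp
      then show False using h B3 by simp
    qed
  qed
qed

lemma card_blocks_le:
  assumes P: "(Ph, Pt) \<in> rsc r n" and len: "length w = n" and C: "Cc Ph Pt (\<lambda>j. w ! (j-1))"
  shows "card (set w) \<le> card (blocks (Ph,Pt))"
    and "card (set w) = card (blocks (Ph,Pt)) \<Longrightarrow> 0 \<notin> set w \<Longrightarrow> Mc n Ph Pt w"
proof -
  have U: "\<Union>(set Ph \<union> Pt) = {1..n}" by (rule rsc_U[OF P])
  have c1: "\<forall>B\<in>set Ph \<union> Pt. \<forall>a\<in>B. \<forall>b\<in>B. w ! (a-1) = w ! (b-1)"
   and c2: "\<forall>i j a b. i < j \<and> j < length Ph \<and> a \<in> Ph ! i \<and> b \<in> Ph ! j \<longrightarrow> w ! (a-1) \<le> w ! (b-1)"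
    using C unfolding Cc_def by blast+
  have finb: "finite (blocks (Ph,Pt))" by (rule rsc_finite_blocks(1)[OF P])
  have minB: "Min B \<in> B" if "B \<in> blocks (Ph,Pt)" for B
    using rsc_finite_blocks(2)[OF P that] blocks_ne[OF P that] by simp
  have gB: "w ! (j-1) = key w B" if "B \<in> blocks (Ph,Pt)" "j \<in> B" for B j
  proof -
    have "B \<in> set Ph \<union> Pt" using that(1) by (simp add: blocks_def)
    then show ?thesis using c1 minB[OF that(1)] that(2) unfolding key_def by blast
  qed
  have img: "set w = key w ` blocks (Ph,Pt)"
  proof
    show "set w \<subseteq> key w ` blocks (Ph,Pt)"
    proof
      fix x assume "x \<in> set w"
      then obtain i where i: "i < n" "x = w ! i" using len by (auto simp: in_set_conv_nth)
      then have "Suc i \<in> {1..n}" by simp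
      then obtain B where "B \<in> blocks (Ph,Pt)" "Suc i \<in> B" using blocks_cover[OF P] by blast
      then have "x = key w B" using gB[of B "Suc i"] i by simp
      then show "x \<in> key w ` blocks (Ph,Pt)" using \<open>B \<in> blocks (Ph,Pt)\<close> by blast
    qed
    show "key w ` blocks (Ph,Pt) \<subseteq> set w"
    proof
      fix x assume "x \<in> key w ` blocks (Ph,Pt)"
      then obtain B where B: "B \<in> blocks (Ph,Pt)" "x = key w B" by blast
      then have "Min B \<in> {1..n}" using minB blocks_sub[OF P] by blast
      then have "Min B - 1 < length w" using len by auto
      then show "x \<in> set w" using B unfolding key_def by simp
    qed
  qed
  show "card (set w) \<le> card (blocks (Ph,Pt))" unfolding img by (rule card_image_le[OF finb])
  assume eq: "card (set w) = card (blocks (Ph,Pt))" and nz: "0 \<notin> set w"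
  have "card (key w ` blocks (Ph,Pt)) = card (blocks (Ph,Pt))" using eq img by simp
  then have inj: "inj_on (key w) (blocks (Ph,Pt))"
    using inj_on_iff_eq_card[OF finb] by blast
  show "Mc n Ph Pt w"
    unfolding Mc_def
  proof (intro conjI ballI allI impI)
    show "length w = n" "0 \<notin> set w" using len nz by auto
  next
    fix j k assume j: "j \<in> {1..n}" and k: "k \<in> {1..n}"
    obtain B where B: "B \<in> blocks (Ph,Pt)" "j \<in> B" using blocks_cover[OF P j] by blast
    obtain B' where B': "B' \<in> blocks (Ph,Pt)" "k \<in> B'" using blocks_cover[OF P k] by blast
    show "(w ! (j-1) = w ! (k-1)) \<longleftrightarrow> same_block Ph Pt j k"
    proof
      assume e: "w ! (j-1) = w ! (k-1)"
      have "w ! (j-1) = key w B" using gB[OF B] .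
      moreover have "w ! (k-1) = key w B'" using gB[OF B'] .
      ultimately have "key w B = key w B'" using e by simp
      then have "B = B'" using inj_onD[OF inj _ B(1) B'(1)] by simp
      then show "same_block Ph Pt j k" using B B' by (auto simp: same_block_blocks)
    next
      assume "same_block Ph Pt j k"
      then obtain B3 where B3: "B3 \<in> blocks (Ph,Pt)" "j \<in> B3" "k \<in> B3" by (auto simp: same_block_blocks)
      show "w ! (j-1) = w ! (k-1)" using gB[OF B3(1) B3(2)] gB[OF B3(1) B3(3)] by simp
    qed
  next
    fix l m j k assume h: "l < m \<and> m < length Ph \<and> j \<in> Ph ! l \<and> k \<in> Ph ! m"
    have le: "w ! (j-1) \<le> w ! (k-1)" using c2 h by presburger
    have bl: "Ph ! l \<in> blocks (Ph,Pt)" "Ph ! m \<in> blocks (Ph,Pt)" using h by (auto simp: blocks_def)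
    have "w ! (j-1) \<noteq> w ! (k-1)"
    proof
      assume e: "w ! (j-1) = w ! (k-1)"
      have "w ! (j-1) = key w (Ph ! l)" using gB[OF bl(1)] h by simp
      moreover have "w ! (k-1) = key w (Ph ! m)" using gB[OF bl(2)] h by simp
      ultimately have "key w (Ph ! l) = key w (Ph ! m)" using e by simp
      then have "Ph ! l = Ph ! m" using inj_onD[OF inj _ bl(1) bl(2)] by simp
      moreover have "l \<noteq> m" "l < length Ph" "m < length Ph" using h by auto
      then have "Ph ! l \<inter> Ph ! m = {}" using rscD(2)[OF P] by blast
      ultimately show False using h by blast
    qed
    then show "w ! (j-1) < w ! (k-1)" using le by simp
  qed
qed

lemma card_blocks_ge:
  assumes P: "(Ph, Pt) \<in> rsc r n" and M: "Mc n Ph Pt w"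
  shows "card (blocks (Ph,Pt)) \<le> card (set w)"
proof -
  have finb: "finite (blocks (Ph,Pt))" by (rule rsc_finite_blocks(1)[OF P])
  have len: "length w = n" using M unfolding Mc_def by simp
  have inj: "inj_on (key w) (blocks (Ph,Pt))"
    using Mc_key(1)[OF P M] unfolding inj_on_def by metis
  have sub: "key w ` blocks (Ph,Pt) \<subseteq> set w"
  proof
    fix x assume "x \<in> key w ` blocks (Ph,Pt)"
    then obtain B where B: "B \<in> blocks (Ph,Pt)" "x = key w B" by blast
    then have "Min B \<in> {1..n}" using Mc_key(2)[OF P M] blocks_sub[OF P] by blast
    then have "Min B - 1 < length w" using len by auto
    then show "x \<in> set w" using B unfolding key_def by simp
  qed
  have "card (blocks (Ph,Pt)) = card (key w ` blocks (Ph,Pt))" using card_image[OF inj] by simp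
  also have "\<dots> \<le> card (set w)" using sub by (rule card_mono[OF finite_set])
  finally show ?thesis .
qed

lemma Mc_ord:
  assumes P: "(Ph, Pt) \<in> rsc r n" and M: "Mc n Ph Pt w"
    and i: "i < length Ph" and j: "j < length Ph" and a: "a \<in> Ph ! i" and b: "b \<in> Ph ! j"
  shows "w ! (a-1) \<le> w ! (b-1) \<longleftrightarrow> i \<le> j"
proof -
  have eqv: "\<forall>j\<in>{1..n}. \<forall>k\<in>{1..n}. (w ! (j-1) = w ! (k-1)) \<longleftrightarrow> same_block Ph Pt j k"
    and ord: "\<forall>l m j k. l < m \<and> m < length Ph \<and> j \<in> Ph ! l \<and> k \<in> Ph ! m \<longrightarrow> w ! (j-1) < w ! (k-1)"
    using M unfolding Mc_def by blast+
  consider "i = j" | "i < j" | "j < i" by linarith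
  then show ?thesis
  proof cases
    case 1
    have "Ph ! i \<in> blocks (Ph,Pt)" using i by (simp add: blocks_def)
    then have "a \<in> {1..n}" "b \<in> {1..n}" using blocks_sub[OF P] a b 1 by blast+
    moreover have "same_block Ph Pt a b" using a b 1 i unfolding same_block_def by auto
    ultimately have "w ! (a-1) = w ! (b-1)" using eqv by blast
    then show ?thesis using 1 by simp
  next
    case 2
    then have "w ! (a-1) < w ! (b-1)" using ord a b j by blast
    then show ?thesis using 2 by simp
  next
    case 3
    then have "w ! (b-1) < w ! (a-1)" using ord a b i by blast
    then show ?thesis using 3 by simp
  qed
qed

lemma big_block:
  assumes P: "(Ph, Pt) \<in> rsc r n" and Q: "(Qh, Qt) \<in> rsc r n" and M: "Mc n Ph Pt w"
    and C: "Cc Qh Qt (\<lambda>j. w ! (j-1))" and i: "i < length Qh" and a: "a \<in> Qh ! i"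
  shows "\<exists>i'<length Ph. a \<in> Ph ! i'"
proof -
  have c1: "\<forall>B\<in>set Qh \<union> Qt. \<forall>a\<in>B. \<forall>b\<in>B. w ! (a-1) = w ! (b-1)"
    using C unfolding Cc_def by blast
  have eqv: "\<forall>j\<in>{1..n}. \<forall>k\<in>{1..n}. (w ! (j-1) = w ! (k-1)) \<longleftrightarrow> same_block Ph Pt j k"
    using M unfolding Mc_def by blast
  have Qb: "Qh ! i \<in> blocks (Qh,Qt)" using i by (simp add: blocks_def)
  have Qs: "Qh ! i \<subseteq> {1..n}" using blocks_sub[OF Q Qb] .
  have an: "a \<in> {1..n}" using Qs a by blast
  obtain D where D: "D \<in> blocks (Ph,Pt)" "a \<in> D" using blocks_cover[OF P an] by blast
  have sub: "Qh ! i \<subseteq> D"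
  proof
    fix x assume x: "x \<in> Qh ! i"
    have "Qh ! i \<in> set Qh \<union> Qt" using i by simp
    then have "w ! (x-1) = w ! (a-1)" using c1 x a by blast
    moreover have "x \<in> {1..n}" using Qs x by blast
    ultimately have "same_block Ph Pt x a" using eqv an by blast
    then obtain B3 where B3: "B3 \<in> blocks (Ph,Pt)" "x \<in> B3" "a \<in> B3" by (auto simp: same_block_blocks)
    then have "B3 = D" using blocks_uniq[OF P B3(1) D(1) B3(3) D(2)] by simp
    then show "x \<in> D" using B3 by simp
  qed
  have "r \<le> card (Qh ! i)" using rscD(3)[OF Q] i by simp
  also have "\<dots> \<le> card D" using card_mono[OF rsc_finite_blocks(2)[OF P D(1)] sub] .
  finally have "D \<in> set Ph" using blocks_big[OF P D(1)] by simp
  then show ?thesis using D(2) by (auto simp: in_set_conv_nth)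
qed

lemma Cc_invariant:
  assumes P: "(Ph, Pt) \<in> rsc r n" and Q: "(Qh, Qt) \<in> rsc r n"
    and M: "Mc n Ph Pt w" and M': "Mc n Ph Pt w'" and C: "Cc Qh Qt (\<lambda>j. w ! (j-1))"
  shows "Cc Qh Qt (\<lambda>j. w' ! (j-1))"
proof -
  have U: "\<Union>(set Qh \<union> Qt) = {1..n}" by (rule rsc_U[OF Q])
  have eqv: "\<forall>j\<in>{1..n}. \<forall>k\<in>{1..n}. (w ! (j-1) = w ! (k-1)) \<longleftrightarrow> same_block Ph Pt j k"
    using M unfolding Mc_def by blast
  have eqv': "\<forall>j\<in>{1..n}. \<forall>k\<in>{1..n}. (w' ! (j-1) = w' ! (k-1)) \<longleftrightarrow> same_block Ph Pt j k"
    using M' unfolding Mc_def by blast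
  have E: "(w ! (j-1) = w ! (k-1)) \<longleftrightarrow> (w' ! (j-1) = w' ! (k-1))" if "j \<in> {1..n}" "k \<in> {1..n}" for j k
    using eqv eqv' that by blast
  have c1: "\<forall>B\<in>set Qh \<union> Qt. \<forall>a\<in>B. \<forall>b\<in>B. w ! (a-1) = w ! (b-1)"
   and c2: "\<forall>i j a b. i < j \<and> j < length Qh \<and> a \<in> Qh ! i \<and> b \<in> Qh ! j \<longrightarrow> w ! (a-1) \<le> w ! (b-1)"
   and c3: "\<forall>B\<in>Qt. \<forall>a\<in>B. \<forall>b\<in>\<Union>(set Qh \<union> Qt) - B. w ! (a-1) \<noteq> w ! (b-1)"
    using C unfolding Cc_def by blast+
  show ?thesis unfolding Cc_def
  proof (intro conjI ballI allI impI)
    fix B a b assume h: "B \<in> set Qh \<union> Qt" "a \<in> B" "b \<in> B"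
    then have "a \<in> {1..n}" "b \<in> {1..n}" using U by blast+
    moreover have "w ! (a-1) = w ! (b-1)" using c1 h by blast
    ultimately show "w' ! (a-1) = w' ! (b-1)" using E by blast
  next
    fix B a b assume h: "B \<in> Qt" "a \<in> B" "b \<in> \<Union>(set Qh \<union> Qt) - B"
    then have "a \<in> {1..n}" "b \<in> {1..n}" using U by blast+
    moreover have "w ! (a-1) \<noteq> w ! (b-1)" using c3 h by blast
    ultimately show "w' ! (a-1) \<noteq> w' ! (b-1)" using E by blast
  next
    fix i j a b assume h: "i < j \<and> j < length Qh \<and> a \<in> Qh ! i \<and> b \<in> Qh ! j"
    have le: "w ! (a-1) \<le> w ! (b-1)" using c2 h by presburger
    obtain i' where i': "i' < length Ph" "a \<in> Ph ! i'"
      using big_block[OF P Q M C, of i a] h by auto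
    obtain j' where j': "j' < length Ph" "b \<in> Ph ! j'"
      using big_block[OF P Q M C, of j b] h by auto
    have "i' \<le> j'" using le Mc_ord[OF P M i'(1) j'(1) i'(2) j'(2)] by simp
    then show "w' ! (a-1) \<le> w' ! (b-1)" using Mc_ord[OF P M' i'(1) j'(1) i'(2) j'(2)] by simp
  qed
qed

lemma Fbar_invariant:
  assumes P: "(Ph, Pt) \<in> rsc r n" and Q: "(Qh, Qt) \<in> rsc r n"
    and M: "Mc n Ph Pt w" and M': "Mc n Ph Pt w'"
  shows "Fbar (Qh, Qt) w = Fbar (Qh, Qt) w'"
proof -
  have "length w = n" "0 \<notin> set w" "length w' = n" "0 \<notin> set w'" using M M' unfolding Mc_def by auto
  moreover have "Cc Qh Qt (\<lambda>j. w ! (j-1)) \<longleftrightarrow> Cc Qh Qt (\<lambda>j. w' ! (j-1))"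
    using Cc_invariant[OF P Q M M'] Cc_invariant[OF P Q M' M] by blast
  ultimately show ?thesis using Fbar_eq[OF Q, of w] Fbar_eq[OF Q, of w'] by simp
qed



lemma sum_fun_apply: "finite A \<Longrightarrow> (sum f A :: ncseries) x = (\<Sum>a\<in>A. f a x)"
  by (induction A rule: finite_induct) auto

lemma Mmon_pp: "PP \<in> rsc r n \<Longrightarrow> Mmon n PP w = (if Mc n (fst PP) (snd PP) w then 1 else 0)"
  using Mmon_eq[of n "fst PP" "snd PP" w] by simp

lemma rsc_pp: "PP \<in> rsc r n \<Longrightarrow> (fst PP, snd PP) \<in> rsc r n" by simp

lemma Mmon_unique:
  assumes "PP \<in> rsc r n" "QQ \<in> rsc r n" "Mmon n PP w \<noteq> 0" "Mmon n QQ w \<noteq> 0"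
  shows "PP = QQ"
proof -
  have "Mc n (fst PP) (snd PP) w" "Mc n (fst QQ) (snd QQ) w" using assms Mmon_pp by (metis)+
  then have "fst PP = fst QQ \<and> snd PP = snd QQ" using Mc_unique[OF rsc_pp[OF assms(1)] rsc_pp[OF assms(2)]] by blast
  then show ?thesis by (simp add: prod_eq_iff)
qed

definition wit :: "nat \<Rightarrow> nat set list \<times> nat set set \<Rightarrow> nat list" where
  "wit n PP = (SOME w. Mc n (fst PP) (snd PP) w)"

lemma wit_Mc: "PP \<in> rsc r n \<Longrightarrow> Mc n (fst PP) (snd PP) (wit n PP)"
  unfolding wit_def using witness_exists[OF rsc_pp] by (metis someI_ex)

lemma wit_Mmon: "PP \<in> rsc r n \<Longrightarrow> Mmon n PP (wit n PP) = 1"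
  using wit_Mc Mmon_pp by metis

lemma Mmon_type:
  assumes "length w = n" "0 \<notin> set w"
  shows "\<exists>PP\<in>rsc r n. Mmon n PP w = 1"
proof -
  obtain Ph Pt where "(Ph, Pt) \<in> rsc r n" "Mc n Ph Pt w" using type_exists[OF assms] by blast
  then show ?thesis using Mmon_eq[of n Ph Pt w] by (intro bexI[of _ "(Ph,Pt)"]) auto
qed

lemma Fbar_pp: "PP \<in> rsc r n \<Longrightarrow> Fbar PP w =
   (if length w = n \<and> 0 \<notin> set w \<and> Cc (fst PP) (snd PP) (\<lambda>j. w ! (j-1)) then 1 else 0)"
  using Fbar_eq[OF rsc_pp] by simp

lemma Fbar_self: "PP \<in> rsc r n \<Longrightarrow> Mmon n PP w \<noteq> 0 \<Longrightarrow> Fbar PP w = 1"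
proof -
  assume P: "PP \<in> rsc r n" and "Mmon n PP w \<noteq> 0"
  then have M: "Mc n (fst PP) (snd PP) w" using Mmon_pp by metis
  then have "Cc (fst PP) (snd PP) (\<lambda>j. w ! (j-1))" using Mc_Cc[OF rsc_pp[OF P]] by blast
  then show ?thesis using M Fbar_pp[OF P] unfolding Mc_def by simp
qed

definition bc :: "nat set list \<times> nat set set \<Rightarrow> nat" where
  "bc PP = card (blocks PP)"

lemma tri:
  assumes P: "PP \<in> rsc r n" and Q: "QQ \<in> rsc r n" and M: "Mmon n PP w \<noteq> 0"
    and F: "Fbar QQ w \<noteq> 0" and ne: "PP \<noteq> QQ"
  shows "bc PP < bc QQ"
proof -
  have MP: "Mc n (fst PP) (snd PP) w" using M Mmon_pp[OF P] by metis
  have ge: "bc PP \<le> card (set w)" using card_blocks_ge[OF rsc_pp[OF P] MP] unfolding bc_def by simp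
  have h: "length w = n" "0 \<notin> set w" "Cc (fst QQ) (snd QQ) (\<lambda>j. w ! (j-1))"
    using F Fbar_pp[OF Q, of w] by (auto split: if_splits)
  note cb = card_blocks_le[OF rsc_pp[OF Q] h(1) h(3)]
  have "card (set w) \<noteq> bc QQ"
  proof
    assume "card (set w) = bc QQ"
    then have "Mc n (fst QQ) (snd QQ) w" using cb(2) h(2) unfolding bc_def by simp
    then have "Mmon n QQ w \<noteq> 0" using Mmon_pp[OF Q] by simp
    then show False using Mmon_unique[OF P Q M] ne by simp
  qed
  then show ?thesis using ge cb(1) unfolding bc_def by simp
qed

lemma Fbar_in_span:
  assumes Q: "QQ \<in> rsc r n"
  shows "Fbar QQ \<in> Q.span (Mmon n ` rsc r n)"
proof -
  define c where "c PP = Fbar QQ (wit n PP)" for PP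
  have fin: "finite (rsc r n)" by (rule rsc_finite)
  have eq: "Fbar QQ = (\<Sum>PP\<in>rsc r n. qscale (c PP) (Mmon n PP))"
  proof
    fix w
    have rhs: "(\<Sum>PP\<in>rsc r n. qscale (c PP) (Mmon n PP)) w = (\<Sum>PP\<in>rsc r n. c PP * Mmon n PP w)"
      using sum_fun_apply[OF fin] by (simp add: qscale_def)
    show "Fbar QQ w = (\<Sum>PP\<in>rsc r n. qscale (c PP) (Mmon n PP)) w"
    proof (cases "length w = n \<and> 0 \<notin> set w")
      case True
      then obtain P0 where P0: "P0 \<in> rsc r n" "Mmon n P0 w = 1" using Mmon_type by blast
      have "(\<Sum>PP\<in>rsc r n. c PP * Mmon n PP w) = c P0 * Mmon n P0 w + (\<Sum>PP\<in>rsc r n - {P0}. c PP * Mmon n PP w)"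
        using sum.remove[OF fin P0(1)] by blast
      also have "(\<Sum>PP\<in>rsc r n - {P0}. c PP * Mmon n PP w) = 0"
      proof (rule sum.neutral, rule ballI)
        fix PP assume "PP \<in> rsc r n - {P0}"
        then have "Mmon n PP w = 0" using Mmon_unique[OF _ P0(1), of PP w] P0(2) by auto
        then show "c PP * Mmon n PP w = 0" by simp
      qed
      also have "c P0 * Mmon n P0 w = Fbar QQ w"
      proof -
        have "Fbar (fst QQ, snd QQ) (wit n P0) = Fbar (fst QQ, snd QQ) w"
          using Fbar_invariant[OF rsc_pp[OF P0(1)] rsc_pp[OF Q] wit_Mc[OF P0(1)]] P0(2) Mmon_pp[OF P0(1), of w]
          by (metis one_neq_zero)
        then show ?thesis unfolding c_def using P0(2) by simp
      qed
      finally show ?thesis using rhs by simp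
    next
      case False
      have "Mmon n PP w = 0" if "PP \<in> rsc r n" for PP
        using False Mmon_pp[OF that, of w] unfolding Mc_def by auto
      then have "(\<Sum>PP\<in>rsc r n. c PP * Mmon n PP w) = 0" by simp
      moreover have "Fbar QQ w = 0" using False Fbar_pp[OF Q, of w] by auto
      ultimately show ?thesis using rhs by simp
    qed
  qed
  show ?thesis unfolding eq
    by (intro Q.span_sum Q.span_scale Q.span_base) auto
qed

lemma inj_Mmon: "inj_on (Mmon n) (rsc r n)"
proof (rule inj_onI)
  fix PP QQ assume P: "PP \<in> rsc r n" and Q: "QQ \<in> rsc r n" and e: "Mmon n PP = Mmon n QQ"
  have "Mmon n QQ (wit n PP) \<noteq> 0" using wit_Mmon[OF P] e by (metis one_neq_zero)
  moreover have "Mmon n PP (wit n PP) \<noteq> 0" using wit_Mmon[OF P] by simp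
  ultimately show "PP = QQ" using Mmon_unique[OF P Q] by blast
qed

lemma inj_Fbar: "inj_on Fbar (rsc r n)"
proof (rule inj_onI, rule ccontr)
  fix PP QQ assume P: "PP \<in> rsc r n" and Q: "QQ \<in> rsc r n" and e: "Fbar PP = Fbar QQ" and ne: "PP \<noteq> QQ"
  have M1: "Mmon n PP (wit n PP) \<noteq> 0" "Mmon n QQ (wit n QQ) \<noteq> 0" using wit_Mmon P Q by simp_all
  have "Fbar QQ (wit n PP) \<noteq> 0" using Fbar_self[OF P M1(1)] e by simp
  then have "bc PP < bc QQ" using tri[OF P Q M1(1) _ ne] by simp
  moreover have "Fbar PP (wit n QQ) \<noteq> 0" using Fbar_self[OF Q M1(2)] e by simp
  then have "bc QQ < bc PP" using tri[OF Q P M1(2) _ ] ne by simp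
  ultimately show False by simp
qed

lemma indep_Mmon: "Q.independent (Mmon n ` rsc r n)"
proof (rule Q.independent_if_scalars_zero)
  show "finite (Mmon n ` rsc r n)" using rsc_finite by simp
  fix f x assume s: "(\<Sum>x\<in>Mmon n ` rsc r n. qscale (f x) x) = 0" and x: "x \<in> Mmon n ` rsc r n"
  obtain PP where P: "PP \<in> rsc r n" and xP: "x = Mmon n PP" using x by blast
  define w where "w = wit n PP"
  let ?A = "Mmon n ` rsc r n"
  have finA: "finite ?A" using rsc_finite by simp
  have "0 = (\<Sum>y\<in>?A. qscale (f y) y) w" using s by simp
  also have "\<dots> = (\<Sum>y\<in>?A. f y * y w)" using sum_fun_apply[OF finA] by (simp add: qscale_def)
  also have "\<dots> = f x * x w + (\<Sum>y\<in>?A - {x}. f y * y w)" using sum.remove[OF finA x] by blast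
  also have "(\<Sum>y\<in>?A - {x}. f y * y w) = 0"
  proof (rule sum.neutral, rule ballI)
    fix y assume y: "y \<in> ?A - {x}"
    then obtain QQ where Q: "QQ \<in> rsc r n" and yQ: "y = Mmon n QQ" by blast
    have "y w = 0"
    proof (rule ccontr)
      assume "y w \<noteq> 0"
      then have "PP = QQ" using Mmon_unique[OF P Q, of w] wit_Mmon[OF P] yQ unfolding w_def by simp
      then show False using y xP yQ by simp
    qed
    then show "f y * y w = 0" by simp
  qed
  also have "x w = 1" using wit_Mmon[OF P] xP unfolding w_def by simp
  finally show "f x = 0" by simp
qed

lemma indep_Fbar: "Q.independent (Fbar ` rsc r n)"
proof (rule Q.independent_if_scalars_zero)
  let ?A = "Fbar ` rsc r n"
  have finA: "finite ?A" using rsc_finite by simp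
  show "finite ?A" by (rule finA)
  fix f x assume s: "(\<Sum>x\<in>?A. qscale (f x) x) = 0" and x: "x \<in> ?A"
  show "f x = 0"
  proof (rule ccontr)
    assume fx: "f x \<noteq> 0"
    define N where "N = {y\<in>?A. f y \<noteq> 0}"
    define pp where "pp y = inv_into (rsc r n) Fbar y" for y
    have pp: "pp y \<in> rsc r n" "Fbar (pp y) = y" if "y \<in> ?A" for y
      using that unfolding pp_def by (auto intro: inv_into_into f_inv_into_f)
    have finN: "finite N" using finA unfolding N_def by simp
    have neN: "N \<noteq> {}" using x fx unfolding N_def by blast
    define m where "m = Max ((\<lambda>y. bc (pp y)) ` N)"
    have "m \<in> (\<lambda>y. bc (pp y)) ` N" unfolding m_def using finN neN by simp
    then obtain y0 where y0: "y0 \<in> N" "bc (pp y0) = m" by blast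
    have mx: "bc (pp y) \<le> m" if "y \<in> N" for y unfolding m_def using finN that by simp
    have y0A: "y0 \<in> ?A" and fy0: "f y0 \<noteq> 0" using y0 unfolding N_def by auto
    define w where "w = wit n (pp y0)"
    have Mw: "Mmon n (pp y0) w \<noteq> 0" using wit_Mmon[OF pp(1)[OF y0A]] unfolding w_def by simp
    have "0 = (\<Sum>y\<in>?A. qscale (f y) y) w" using s by simp
    also have "\<dots> = (\<Sum>y\<in>?A. f y * y w)" using sum_fun_apply[OF finA] by (simp add: qscale_def)
    also have "\<dots> = f y0 * y0 w + (\<Sum>y\<in>?A - {y0}. f y * y w)" using sum.remove[OF finA y0A] by blast
    also have "(\<Sum>y\<in>?A - {y0}. f y * y w) = 0"
    proof (rule sum.neutral, rule ballI)
      fix y assume y: "y \<in> ?A - {y0}"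
      show "f y * y w = 0"
      proof (rule ccontr)
        assume nz: "f y * y w \<noteq> 0"
        then have yN: "y \<in> N" using y unfolding N_def by auto
        have Fy: "Fbar (pp y) w \<noteq> 0" using nz pp(2)[of y] y by auto
        have "pp y0 \<noteq> pp y" using pp(2)[OF y0A] pp(2)[of y] y by auto
        then have "bc (pp y0) < bc (pp y)" using tri[OF pp(1)[OF y0A] _ Mw Fy] pp(1)[of y] y by auto
        then show False using mx[OF yN] y0(2) by simp
      qed
    qed
    also have "y0 w = 1" using Fbar_self[OF pp(1)[OF y0A] Mw] pp(2)[OF y0A] by simp
    finally show False using fy0 by simp
  qed
qed

lemma span_Fbar: "Q.span (Fbar ` rsc r n) = NCQSym r n"
proof
  let ?F = "Fbar ` rsc r n" and ?M = "Mmon n ` rsc r n"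
  have FM: "?F \<subseteq> Q.span ?M" using Fbar_in_span by blast
  show "Q.span ?F \<subseteq> NCQSym r n" unfolding NCQSym_def
    using Q.span_mono[OF FM] Q.span_span by blast
  have finM: "finite ?M" using rsc_finite by simp
  have cF: "card ?F = card (rsc r n)" using card_image[OF inj_Fbar] .
  have cM: "card ?M = card (rsc r n)" using card_image[OF inj_Mmon] .
  have MF: "?M \<subseteq> Q.span ?F"
  proof
    fix x assume x: "x \<in> ?M"
    show "x \<in> Q.span ?F"
    proof (rule ccontr)
      assume nx: "x \<notin> Q.span ?F"
      have ind: "Q.independent (insert x ?F)" using Q.independent_insertI[OF nx indep_Fbar] .
      have sub: "insert x ?F \<subseteq> Q.span ?M" using FM x Q.span_base by blast
      have "card (insert x ?F) \<le> card ?M" using Q.independent_span_bound[OF finM ind sub] by simp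
      moreover have "x \<notin> ?F" using nx Q.span_base by blast
      moreover have "finite ?F" using rsc_finite by simp
      ultimately show False using cF cM by simp
    qed
  qed
  show "NCQSym r n \<subseteq> Q.span ?F" unfolding NCQSym_def
    using Q.span_mono[OF MF] Q.span_span by blast
qed

theorem mainTheorem4:
  fixes r n :: nat
  assumes "r \<ge> 1"
  shows "basis_family (NCQSym r n) (rsc r n) (Mmon n)
       \<and> basis_family (NCQSym r n) (rsc r n) Fbar"
  unfolding basis_family_def
  using inj_Mmon inj_Fbar indep_Mmon indep_Fbar span_Fbar
  by (simp add: NCQSym_def)

end
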